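(* Let $p$ be a complex polynomial with exactly two distinct roots, and let $h\in\mathbb{C}$ satisfy $|h-\mu|<\mu$, where $\mu$ is the smaller of the two root multiplicities. Then the Julia set of the relaxed Newton map $N_{h,p}(z)=z-h\,p(z)/p'(z)$ is a (straight) line (together with $\infty$) if and only if the two roots of $p$ have equal multiplicity and $h$ is real.
   Context: $N_{h,p}$ is regarded as a rational map of the Riemann sphere; its Julia set is the complement of the set of points where the iterates form a normal family. The condition $|h-\mu|<\mu$ ensures both roots are attracting fixed points of $N_{h,p}$ (a root of multiplicity $\mu_0$ has multiplier $1-h/\mu_0$). *)

theory Defs
  imports "HOL-Analysis.Analysis" "HOL-Computational_Algebra.Polynomial_Factorial" "HOL-Computational_Algebra.Field_as_Ring"
begin

text \<open>The Riemann sphere is modelled as \<open>complex option\<close>: \<open>Some z\<close> is the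
finite point z and \<open>None\<close> is the point at infinity.\<close>

type_synonym rsphere = "complex option"

definition stereo :: "rsphere \<Rightarrow> complex \<times> real" where
  "stereo w = (case w of
      None \<Rightarrow> (0, 1)
    | Some z \<Rightarrow> ((2 * z) / complex_of_real (1 + (cmod z)\<^sup>2),
                 ((cmod z)\<^sup>2 - 1) / ((cmod z)\<^sup>2 + 1)))"

definition cdist :: "rsphere \<Rightarrow> rsphere \<Rightarrow> real" where
  "cdist v w = dist (stereo v) (stereo w)"

definition sphere_open :: "rsphere set \<Rightarrow> bool" where
  "sphere_open U \<longleftrightarrow> (\<forall>z\<in>U. \<exists>e>0. \<forall>w. cdist z w < e \<longrightarrow> w \<in> U)"

definition loc_unif_conv ::
    "rsphere set \<Rightarrow> (nat \<Rightarrow> rsphere \<Rightarrow> rsphere) \<Rightarrow> (rsphere \<Rightarrow> rsphere) \<Rightarrow> bool" where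
  "loc_unif_conv U F g \<longleftrightarrow>
     (\<forall>w\<in>U. \<exists>d>0. \<forall>e>0. \<exists>N. \<forall>n\<ge>N. \<forall>x\<in>U. cdist w x < d \<longrightarrow> cdist (F n x) (g x) < e)"

definition normal_iterates :: "(rsphere \<Rightarrow> rsphere) \<Rightarrow> rsphere set \<Rightarrow> bool" where
  "normal_iterates f U \<longleftrightarrow>
     (\<forall>k :: nat \<Rightarrow> nat. \<exists>r g. strict_mono r \<and> loc_unif_conv U (\<lambda>n. (f ^^ k (r n))) g)"

definition fatou_set :: "(rsphere \<Rightarrow> rsphere) \<Rightarrow> rsphere set" where
  "fatou_set f = {z. \<exists>U. sphere_open U \<and> z \<in> U \<and> normal_iterates f U}"

definition julia_set :: "(rsphere \<Rightarrow> rsphere) \<Rightarrow> rsphere set" where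
  "julia_set f = UNIV - fatou_set f"

text \<open>Extension of the rational function P/Q (P, Q coprime, Q \<noteq> 0) to the sphere.\<close>
definition rat_ext :: "complex poly \<Rightarrow> complex poly \<Rightarrow> rsphere \<Rightarrow> rsphere" where
  "rat_ext P Q w = (case w of
      Some z \<Rightarrow> (if poly Q z = 0 then None else Some (poly P z / poly Q z))
    | None \<Rightarrow> (if degree P > degree Q then None
               else if degree P = degree Q then Some (lead_coeff P / lead_coeff Q)
               else Some 0))"

text \<open>Relaxed Newton map N_{h,p}(z) = z - h p(z)/p'(z) = (z p' - h p)/p', written in
lowest terms and regarded as a map of the Riemann sphere.\<close>
definition relaxed_newton :: "complex \<Rightarrow> complex poly \<Rightarrow> rsphere \<Rightarrow> rsphere" where
  "relaxed_newton h p =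
     (let P0 = [:0, 1:] * pderiv p - smult h p;
          Q0 = pderiv p;
          g = gcd P0 Q0
      in rat_ext (P0 div g) (Q0 div g))"

end

theory Submission
  imports Defs "HOL-Computational_Algebra.Fundamental_Theorem_Algebra"
begin

lemma cdist_sym: "cdist v w = cdist w v"
  by (simp add: cdist_def dist_commute)

lemma cdist_triangle: "cdist u w \<le> cdist u v + cdist v w"
  unfolding cdist_def by (rule dist_triangle)

lemma cdist_self [simp]: "cdist v v = 0"
  by (simp add: cdist_def)

lemma cdist_nonneg [simp]: "cdist v w \<ge> 0"
  by (simp add: cdist_def)

lemma cmod_diff_sq: "(cmod (z - w))\<^sup>2 = (cmod z)\<^sup>2 + (cmod w)\<^sup>2 - 2 * (Re z * Re w + Im z * Im w)"
  unfolding cmod_power2 by (simp add: power2_eq_square algebra_simps)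

lemma cmod_of_real_pos: "x \<ge> 0 \<Longrightarrow> cmod (complex_of_real x) = x"
  by simp

lemma r1: fixes s :: real assumes "s \<ge> 0" shows "(2/(1+s))^2 * s + (1 - (s-1)/(s+1))^2 = 4/(1+s)"
proof -
  have p: "1 + s \<noteq> 0" "s + 1 \<noteq> 0" using assms by auto
  show ?thesis using p by (simp add: field_simps) (simp add: power2_eq_square algebra_simps)
qed

lemma r2: fixes s t ip :: real assumes "s \<ge> 0" "t \<ge> 0"
  shows "(2/(1+s))^2 * s + (2/(1+t))^2 * t - 2 * (2/(1+s)) * (2/(1+t)) * ip + ((s - 1) / (s + 1) - (t - 1) / (t + 1))^2
     = 4 * (s + t - 2 * ip) / ((1 + s) * (1 + t))"
proof -
  define u where "u = 2/(1+s)"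
  define v where "v = 2/(1+t)"
  have p: "1 + s \<noteq> 0" "s + 1 \<noteq> 0" "1 + t \<noteq> 0" "t + 1 \<noteq> 0" using assms by auto
  have us: "u * s = 2 - u" using p by (simp add: u_def field_simps)
  have vt: "v * t = 2 - v" using p by (simp add: v_def field_simps)
  have su: "(s - 1) / (s + 1) = 1 - u" using p by (simp add: u_def field_simps)
  have tv: "(t - 1) / (t + 1) = 1 - v" using p by (simp add: v_def field_simps)
  have r: "4 * (s + t - 2 * ip) / ((1 + s) * (1 + t)) = u * v * (s + t - 2 * ip)"
    by (simp add: u_def v_def)
  have "u^2 * s + v^2 * t - 2 * u * v * ip + ((1 - u) - (1 - v))^2 = u * v * (s + t - 2 * ip)"
  proof -
    have "u^2 * s = u * (u * s)" "v^2 * t = v * (v * t)" "u * v * (s + t - 2 * ip) = v * (u * s) + u * (v * t) - 2 * u * v * ip"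
      by (simp_all add: power2_eq_square algebra_simps)
    then show ?thesis unfolding us vt by (simp add: power2_eq_square algebra_simps)
  qed
  then show ?thesis unfolding r su tv by (simp add: u_def v_def)
qed

lemma cdist_None_Some_sq: "(cdist None (Some w))\<^sup>2 = 4 / (1 + (cmod w)\<^sup>2)"
proof -
  define s where "s = (cmod w)\<^sup>2"
  have s0: "s \<ge> 0" by (simp add: s_def)
  have n1: "cmod (2 * w / complex_of_real (1 + s)) = 2 * cmod w / (1 + s)"
    using s0 by (simp add: norm_divide norm_mult cmod_of_real_pos del: of_real_add)
  have "(cdist None (Some w))\<^sup>2 = (cmod (0 - 2 * w / complex_of_real (1 + s)))\<^sup>2 + (1 - (s - 1) / (s + 1))\<^sup>2"
    unfolding cdist_def stereo_def s_def
    by (simp add: dist_Pair_Pair dist_complex_def dist_real_def real_sqrt_pow2 del: of_real_add)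
  also have "\<dots> = (2 * cmod w / (1 + s))\<^sup>2 + (1 - (s - 1) / (s + 1))\<^sup>2"
    using n1 by simp
  also have "\<dots> = 4 / (1 + s)"
    using r1[OF s0] by (simp add: power_divide power_mult_distrib s_def)
  finally show ?thesis by (simp add: s_def)
qed

lemma cmod_lin_sq: "(cmod (complex_of_real x * z - complex_of_real y * w))\<^sup>2
   = x\<^sup>2 * (cmod z)\<^sup>2 + y\<^sup>2 * (cmod w)\<^sup>2 - 2 * x * y * (Re z * Re w + Im z * Im w)"
  unfolding cmod_power2 by (simp add: power2_eq_square algebra_simps)

lemma cdist_Some_Some_sq:
  "(cdist (Some z) (Some w))\<^sup>2 = 4 * (cmod (z - w))\<^sup>2 / ((1 + (cmod z)\<^sup>2) * (1 + (cmod w)\<^sup>2))"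
proof -
  define s where "s = (cmod z)\<^sup>2"
  define t where "t = (cmod w)\<^sup>2"
  have s0: "s \<ge> 0" and t0: "t \<ge> 0" by (simp_all add: s_def t_def)
  have e1: "2 * z / complex_of_real (1 + s) - 2 * w / complex_of_real (1 + t)
      = complex_of_real (2 / (1+s)) * z - complex_of_real (2/(1+t)) * w"
    by (simp add: field_simps)
  have "(cdist (Some z) (Some w))\<^sup>2 = (cmod (complex_of_real (2 / (1+s)) * z - complex_of_real (2/(1+t)) * w))\<^sup>2
       + ((s - 1) / (s + 1) - (t - 1) / (t + 1))\<^sup>2"
    unfolding cdist_def stereo_def s_def t_def
    using e1[unfolded s_def t_def]
    by (simp add: dist_Pair_Pair dist_complex_def dist_real_def real_sqrt_pow2 del: of_real_add)
  also have "\<dots> = (2 / (1+s))\<^sup>2 * s + (2/(1+t))\<^sup>2 * t - 2 * (2 / (1+s)) * (2/(1+t)) * (Re z * Re w + Im z * Im w)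
       + ((s - 1) / (s + 1) - (t - 1) / (t + 1))\<^sup>2"
    by (simp only: cmod_lin_sq s_def t_def)
  also have "\<dots> = 4 * (s + t - 2 * (Re z * Re w + Im z * Im w)) / ((1 + s) * (1 + t))"
    using r2[OF s0 t0, of "Re z * Re w + Im z * Im w"] by (simp only: s_def t_def)
  also have "\<dots> = 4 * (cmod (z - w))\<^sup>2 / ((1 + (cmod z)\<^sup>2) * (1 + (cmod w)\<^sup>2))"
    by (simp add: cmod_diff_sq s_def t_def)
  finally show ?thesis .
qed

lemma one_plus_sq_pos [simp]: "0 < 1 + x\<^sup>2" for x :: real
  by (metis add_pos_nonneg zero_less_one zero_le_power2)

lemma one_plus_sq_nz [simp]: "1 + x\<^sup>2 \<noteq> 0" for x :: real
  using one_plus_sq_pos[of x] by linarith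

lemma cdist_sqrt: "cdist v w = sqrt ((cdist v w)\<^sup>2)"
  by simp

lemma cdist_Some_Some:
  "cdist (Some z) (Some w) = 2 * cmod (z - w) / sqrt ((1 + (cmod z)\<^sup>2) * (1 + (cmod w)\<^sup>2))"
proof -
  have "cdist (Some z) (Some w) = sqrt (4 * (cmod (z - w))\<^sup>2 / ((1 + (cmod z)\<^sup>2) * (1 + (cmod w)\<^sup>2)))"
    using cdist_sqrt cdist_Some_Some_sq by metis
  also have "\<dots> = 2 * cmod (z - w) / sqrt ((1 + (cmod z)\<^sup>2) * (1 + (cmod w)\<^sup>2))"
    by (simp add: real_sqrt_divide real_sqrt_mult)
  finally show ?thesis .
qed

lemma cdist_None_Some: "cdist None (Some w) = 2 / sqrt (1 + (cmod w)\<^sup>2)"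
proof -
  have "cdist None (Some w) = sqrt (4 / (1 + (cmod w)\<^sup>2))"
    using cdist_sqrt cdist_None_Some_sq by metis
  also have "\<dots> = 2 / sqrt (1 + (cmod w)\<^sup>2)"
    by (simp add: real_sqrt_divide)
  finally show ?thesis .
qed

lemma cdist_Some_le: "cdist (Some z) (Some w) \<le> 2 * cmod (z - w)"
proof -
  have "1 \<le> 1 + (cmod z)\<^sup>2" "1 \<le> 1 + (cmod w)\<^sup>2" by simp_all
  then have "1 \<le> (1 + (cmod z)\<^sup>2) * (1 + (cmod w)\<^sup>2)"
    using mult_mono[of 1 "1 + (cmod z)\<^sup>2" 1 "1 + (cmod w)\<^sup>2"] by simp
  then have s1: "1 \<le> sqrt ((1 + (cmod z)\<^sup>2) * (1 + (cmod w)\<^sup>2))"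
    by simp
  have "2 * cmod (z - w) \<le> 2 * cmod (z - w) * sqrt ((1 + (cmod z)\<^sup>2) * (1 + (cmod w)\<^sup>2))"
    using mult_left_mono[OF s1, of "2 * cmod (z - w)"] by simp
  then show ?thesis unfolding cdist_Some_Some
    using s1 by (simp add: divide_le_eq)
qed

lemma sqrt_one_plus_sq_le: "sqrt (1 + x\<^sup>2) \<le> 1 + \<bar>x\<bar>" for x :: real
  by (rule real_le_lsqrt) (auto simp: power2_eq_square algebra_simps)

lemma cdist_Some_None_pos: "cdist (Some z) None > 0"
  by (simp add: cdist_sym[of "Some z"] cdist_None_Some)

lemma cdist_Some_eq0: "cdist (Some z) (Some w) = 0 \<Longrightarrow> z = w"
  by (simp add: cdist_Some_Some)

lemma frac_mono_aux: fixes x y c :: real assumes "0 < c" "0 \<le> x" "x \<le> y"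
  shows "x / (c + x) \<le> y / (c + y)"
proof -
  have "x * (c + y) \<le> y * (c + x)" using mult_left_mono[OF assms(3), of c] assms by (simp add: algebra_simps)
  then show ?thesis using assms by (simp add: divide_simps)
qed

lemma cdist_near_Some:
  assumes "e > 0"
  shows "\<exists>d>0. \<forall>v. cdist (Some z) v < d \<longrightarrow> (\<exists>w. v = Some w \<and> cmod (w - z) < e)"
proof -
  define d where "d = 2 * e / ((1 + cmod z + e) * (1 + cmod z))"
  have d0: "d > 0" using assms by (auto simp: d_def intro!: divide_pos_pos mult_pos_pos add_pos_nonneg)
  have dle: "d \<le> 2 / sqrt (1 + (cmod z)\<^sup>2)"
  proof -
    have q: "e / (1 + cmod z + e) \<le> 1" using assms by (simp add: divide_le_eq add_pos_nonneg)
    have "d = 2 / (1 + cmod z) * (e / (1 + cmod z + e))" by (simp add: d_def)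
    also have "\<dots> \<le> 2 / (1 + cmod z)"
      using mult_left_mono[OF q, of "2 / (1 + cmod z)"] by (simp add: add_pos_nonneg)
    finally have "d \<le> 2 / (1 + cmod z)" .
    also have "\<dots> \<le> 2 / sqrt (1 + (cmod z)\<^sup>2)"
      using sqrt_one_plus_sq_le[of "cmod z"] by (simp add: frac_le)
    finally show ?thesis .
  qed
  have "\<forall>v. cdist (Some z) v < d \<longrightarrow> (\<exists>w. v = Some w \<and> cmod (w - z) < e)"
  proof (intro allI impI)
    fix v assume v: "cdist (Some z) v < d"
    show "\<exists>w. v = Some w \<and> cmod (w - z) < e"
    proof (cases v)
      case None
      then show ?thesis using v dle by (simp add: cdist_sym[of "Some z"] cdist_None_Some)
    next
      case (Some w)
      have "cmod (w - z) < e"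
      proof (rule ccontr)
        assume "\<not> cmod (w - z) < e"
        hence ge: "cmod (w - z) \<ge> e" by simp
        have sz: "sqrt (1 + (cmod z)\<^sup>2) \<le> 1 + cmod z" using sqrt_one_plus_sq_le[of "cmod z"] by simp
        have sw: "sqrt (1 + (cmod w)\<^sup>2) \<le> 1 + cmod z + cmod (w - z)"
          using sqrt_one_plus_sq_le[of "cmod w"] norm_triangle_ineq2[of w z] by simp
        have pos1: "sqrt (1 + (cmod z)\<^sup>2) > 0" "sqrt (1 + (cmod w)\<^sup>2) > 0"
          by (simp_all add: add_pos_nonneg)
        have "d \<le> 2 * cmod (w - z) / ((1 + cmod z + cmod (w - z)) * (1 + cmod z))"
        proof -
          have "e / (1 + cmod z + e) \<le> cmod (w - z) / (1 + cmod z + cmod (w - z))"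
            using frac_mono_aux[of "1 + cmod z" e "cmod (w - z)"] ge assms by (simp add: add.assoc add_pos_nonneg)
          then have "2 / (1 + cmod z) * (e / (1 + cmod z + e)) \<le> 2 / (1 + cmod z) * (cmod (w - z) / (1 + cmod z + cmod (w - z)))"
            by (rule mult_left_mono) (simp add: add_pos_nonneg)
          then show ?thesis unfolding d_def by (simp add: mult.commute)
        qed
        also have "\<dots> \<le> 2 * cmod (w - z) / (sqrt (1 + (cmod z)\<^sup>2) * sqrt (1 + (cmod w)\<^sup>2))"
        proof (rule divide_left_mono)
          show "sqrt (1 + (cmod z)\<^sup>2) * sqrt (1 + (cmod w)\<^sup>2) \<le> (1 + cmod z + cmod (w - z)) * (1 + cmod z)"
            using mult_mono[OF sw sz] pos1 by (simp add: mult.commute)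
        qed (use pos1 in \<open>auto simp: norm_minus_commute intro!: mult_pos_pos add_pos_nonneg\<close>)
        also have "\<dots> = cdist (Some z) v" by (simp add: Some cdist_Some_Some real_sqrt_mult norm_minus_commute)
        finally show False using v by simp
      qed
      then show ?thesis using Some by simp
    qed
  qed
  then show ?thesis using d0 by blast
qed

lemma cdist_near_None:
  "\<exists>d>0. \<forall>v. cdist None v < d \<longrightarrow> v = None \<or> (\<exists>w. v = Some w \<and> cmod w > R)"
proof -
  define d where "d = 2 / (1 + \<bar>R\<bar>)"
  have d0: "d > 0" by (simp add: d_def add_pos_nonneg)
  have "\<forall>v. cdist None v < d \<longrightarrow> v = None \<or> (\<exists>w. v = Some w \<and> cmod w > R)"
  proof (intro allI impI)
    fix v assume v: "cdist None v < d"
    show "v = None \<or> (\<exists>w. v = Some w \<and> cmod w > R)"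
    proof (cases v)
      case (Some w)
      have "cmod w > R"
      proof (rule ccontr)
        assume "\<not> R < cmod w"
        then have "cmod w \<le> \<bar>R\<bar>" by simp
        then have "sqrt (1 + (cmod w)\<^sup>2) \<le> 1 + \<bar>R\<bar>"
          using sqrt_one_plus_sq_le[of "cmod w"] by simp
        then have "d \<le> cdist None v"
          unfolding Some cdist_None_Some d_def by (simp add: frac_le add_pos_nonneg)
        then show False using v by simp
      qed
      then show ?thesis using Some by simp
    qed simp
  qed
  then show ?thesis using d0 by blast
qed

lemma cdist_None_small:
  assumes "e > 0"
  shows "\<exists>R. \<forall>w. cmod w > R \<longrightarrow> cdist None (Some w) < e"
proof -
  have "\<forall>w. cmod w > 2 / e \<longrightarrow> cdist None (Some w) < e"
  proof (intro allI impI)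
    fix w assume w: "cmod w > 2 / e"
    have "cmod w \<le> sqrt (1 + (cmod w)\<^sup>2)" by (rule real_le_rsqrt) simp
    then have "2 / e < sqrt (1 + (cmod w)\<^sup>2)" using w by simp
    moreover have "sqrt (1 + (cmod w)\<^sup>2) > 0" by simp
    ultimately show "cdist None (Some w) < e" unfolding cdist_None_Some
      using assms by (simp add: divide_less_eq field_simps)
  qed
  then show ?thesis by blast
qed

lemma sphere_open_ball: "sphere_open {v. cdist x v < r}"
  unfolding sphere_open_def
proof (intro ballI)
  fix z assume "z \<in> {v. cdist x v < r}"
  then have z: "cdist x z < r" by simp
  show "\<exists>e>0. \<forall>w. cdist z w < e \<longrightarrow> w \<in> {v. cdist x v < r}"
  proof (rule exI[of _ "r - cdist x z"], intro conjI allI impI)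
    fix w assume "cdist z w < r - cdist x z"
    moreover have "cdist x w \<le> cdist x z + cdist z w" by (rule cdist_triangle)
    ultimately show "w \<in> {v. cdist x v < r}" by simp
  qed (use z in simp)
qed

lemma sphere_open_Int: "sphere_open U \<Longrightarrow> sphere_open V \<Longrightarrow> sphere_open (U \<inter> V)"
  unfolding sphere_open_def
proof (intro ballI)
  fix z assume U: "\<forall>z\<in>U. \<exists>e>0. \<forall>w. cdist z w < e \<longrightarrow> w \<in> U"
    and V: "\<forall>z\<in>V. \<exists>e>0. \<forall>w. cdist z w < e \<longrightarrow> w \<in> V" and z: "z \<in> U \<inter> V"
  obtain e1 where "e1 > 0" "\<forall>w. cdist z w < e1 \<longrightarrow> w \<in> U" using U z by blast
  moreover obtain e2 where "e2 > 0" "\<forall>w. cdist z w < e2 \<longrightarrow> w \<in> V" using V z by blast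
  ultimately show "\<exists>e>0. \<forall>w. cdist z w < e \<longrightarrow> w \<in> U \<inter> V"
    by (intro exI[of _ "min e1 e2"]) auto
qed

definition scont :: "(rsphere \<Rightarrow> rsphere) \<Rightarrow> rsphere \<Rightarrow> bool" where
  "scont f x \<longleftrightarrow> (\<forall>e>0. \<exists>d>0. \<forall>y. cdist x y < d \<longrightarrow> cdist (f x) (f y) < e)"

lemma scont_comp: "scont f x \<Longrightarrow> scont g (f x) \<Longrightarrow> scont (\<lambda>y. g (f y)) x"
  unfolding scont_def by metis

lemma scont_id: "scont (\<lambda>y. y) x"
  unfolding scont_def by blast

lemma scont_funpow: "(\<And>x. scont f x) \<Longrightarrow> scont (f ^^ n) x"
proof (induction n arbitrary: x)
  case 0 then show ?case by (simp add: scont_id[unfolded id_def[symmetric]] id_def scont_def) blast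
next
  case (Suc n)
  have "scont (\<lambda>y. f ((f ^^ n) y)) x" by (rule scont_comp) (use Suc in auto)
  then show ?case by (simp add: comp_def)
qed

lemma seq_cases:
  fixes k :: "nat \<Rightarrow> nat"
  shows "(\<exists>j. infinite {n. k n = j}) \<or> (\<forall>N. \<exists>M. \<forall>n\<ge>M. k n \<ge> N)"
proof (cases "\<exists>j. infinite {n. k n = j}")
  case False
  have "\<exists>M. \<forall>n\<ge>M. k n \<ge> N" for N
  proof -
    have "{n. k n < N} = (\<Union>j<N. {n. k n = j})" by auto
    moreover have "finite (\<Union>j<N. {n. k n = j})" using False by auto
    ultimately have "finite {n. k n < N}" by simp
    then obtain M where "\<forall>n\<in>{n. k n < N}. n < M"
      by (metis finite_nat_set_iff_bounded)
    then show ?thesis by (metis mem_Collect_eq not_le order.strict_trans2 less_irrefl)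
  qed
  then show ?thesis by blast
qed simp

lemma const_subseq:
  fixes k :: "nat \<Rightarrow> nat"
  assumes "infinite {n. k n = j}"
  shows "\<exists>r::nat\<Rightarrow>nat. strict_mono r \<and> (\<forall>n. k (r n) = j)"
proof -
  let ?S = "{n. k n = j}"
  have "strict_mono (enumerate ?S)" using assms by (rule strict_mono_enumerate)
  moreover have "\<forall>n. k (enumerate ?S n) = j" using enumerate_in_set[OF assms] by auto
  ultimately show ?thesis by blast
qed

lemma loc_unif_const_fun: "loc_unif_conv U (\<lambda>n. G) G"
  unfolding loc_unif_conv_def by (auto intro: exI[of _ 1])

lemma fatou_from_uniform:
  assumes U: "sphere_open U" "x \<in> U"
    and unif: "\<And>e. e > 0 \<Longrightarrow> \<exists>N. \<forall>n\<ge>N. \<forall>v\<in>U. cdist ((f ^^ n) v) q < e"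
  shows "x \<in> fatou_set f"
proof -
  have "normal_iterates f U"
    unfolding normal_iterates_def
  proof
    fix k :: "nat \<Rightarrow> nat"
    show "\<exists>(r::nat\<Rightarrow>nat) g. strict_mono r \<and> loc_unif_conv U (\<lambda>n. (f ^^ k (r n))) g"
    proof (cases "\<exists>j. infinite {n. k n = j}")
      case True
      then obtain j where "infinite {n. k n = j}" by blast
      from const_subseq[OF this] obtain r :: "nat\<Rightarrow>nat" where r: "strict_mono r" "\<forall>n. k (r n) = j" by blast
      then have "loc_unif_conv U (\<lambda>n. (f ^^ k (r n))) (f ^^ j)"
        using loc_unif_const_fun[of U "f ^^ j"] by simp
      then show ?thesis using r by blast
    next
      case False
      then have K: "\<forall>N. \<exists>M. \<forall>n\<ge>M. k n \<ge> N" using seq_cases by blast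
      have "loc_unif_conv U (\<lambda>n. (f ^^ k n)) (\<lambda>_. q)"
        unfolding loc_unif_conv_def
      proof (intro ballI)
        fix w assume "w \<in> U"
        have "\<exists>N. \<forall>n\<ge>N. \<forall>x\<in>U. cdist w x < 1 \<longrightarrow> cdist ((f ^^ k n) x) q < e" if e: "e > 0" for e :: real
        proof -
          obtain N where N: "\<forall>n\<ge>N. \<forall>v\<in>U. cdist ((f ^^ n) v) q < e" using unif[OF e] by blast
          obtain M where M: "\<forall>n\<ge>M. k n \<ge> N" using K by blast
          show ?thesis using M N by blast
        qed
        then show "\<exists>d>0. \<forall>e>0. \<exists>N. \<forall>n\<ge>N. \<forall>x\<in>U. cdist w x < d \<longrightarrow> cdist ((f ^^ k n) x) q < e"
          by (intro exI[of _ 1]) simp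
      qed
      then show ?thesis by (intro exI[of _ id] exI[of _ "\<lambda>_. q"]) (simp add: strict_mono_def)
    qed
  qed
  then show ?thesis using U unfolding fatou_set_def by blast
qed

lemma fatou_pullback:
  assumes cont: "\<And>x. scont f x" and fv: "f v \<in> fatou_set f"
  shows "v \<in> fatou_set f"
proof -
  obtain U where U: "sphere_open U" "f v \<in> U" "normal_iterates f U"
    using fv unfolding fatou_set_def by blast
  define V where "V = {x. f x \<in> U}"
  have Vo: "sphere_open V"
    unfolding sphere_open_def
  proof
    fix x assume "x \<in> V"
    then have "f x \<in> U" by (simp add: V_def)
    then obtain e where e: "e > 0" "\<forall>w. cdist (f x) w < e \<longrightarrow> w \<in> U"
      using U(1) unfolding sphere_open_def by blast
    obtain d where d: "d > 0" "\<forall>y. cdist x y < d \<longrightarrow> cdist (f x) (f y) < e"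
      using cont[of x] e(1) unfolding scont_def by blast
    show "\<exists>e>0. \<forall>w. cdist x w < e \<longrightarrow> w \<in> V"
      using d e by (auto simp: V_def)
  qed
  have "normal_iterates f V"
    unfolding normal_iterates_def
  proof
    fix k :: "nat \<Rightarrow> nat"
    show "\<exists>(r::nat\<Rightarrow>nat) g. strict_mono r \<and> loc_unif_conv V (\<lambda>n. (f ^^ k (r n))) g"
    proof (cases "\<exists>j. infinite {n. k n = j}")
      case True
      then obtain j where "infinite {n. k n = j}" by blast
      from const_subseq[OF this] obtain r :: "nat\<Rightarrow>nat" where r: "strict_mono r" "\<forall>n. k (r n) = j" by blast
      then have "loc_unif_conv V (\<lambda>n. (f ^^ k (r n))) (f ^^ j)"
        using loc_unif_const_fun[of V "f ^^ j"] by simp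
      then show ?thesis using r by blast
    next
      case False
      then have K: "\<forall>N. \<exists>M. \<forall>n\<ge>M. k n \<ge> N" using seq_cases by blast
      then obtain M where M: "\<forall>n\<ge>M. k n \<ge> 1" by blast
      define k' where "k' n = k (n + M) - 1" for n
      obtain r' :: "nat \<Rightarrow> nat" and g where r': "strict_mono r'" "loc_unif_conv U (\<lambda>n. (f ^^ k' (r' n))) g"
        using U(3) unfolding normal_iterates_def by blast
      define r where "r n = r' n + M" for n
      have rmono: "strict_mono r" using r'(1) by (simp add: r_def strict_mono_def)
      have eq: "(f ^^ k (r n)) x = (f ^^ k' (r' n)) (f x)" for n x
      proof -
        have "k (r' n + M) \<ge> 1" using M by simp
        then have "k (r n) = Suc (k' (r' n))" by (simp add: r_def k'_def)
        then show ?thesis by (simp only: funpow_Suc_right comp_def)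
      qed
      have "loc_unif_conv V (\<lambda>n. (f ^^ k (r n))) (\<lambda>x. g (f x))"
        unfolding loc_unif_conv_def
      proof
        fix w assume w: "w \<in> V"
        then have fw: "f w \<in> U" by (simp add: V_def)
        obtain d' where d': "d' > 0" "\<forall>e>0. \<exists>N. \<forall>n\<ge>N. \<forall>x\<in>U. cdist (f w) x < d' \<longrightarrow> cdist ((f ^^ k' (r' n)) x) (g x) < e"
          using r'(2) fw unfolding loc_unif_conv_def by blast
        obtain d where d: "d > 0" "\<forall>y. cdist w y < d \<longrightarrow> cdist (f w) (f y) < d'"
          using cont[of w] d'(1) unfolding scont_def by blast
        show "\<exists>d>0. \<forall>e>0. \<exists>N. \<forall>n\<ge>N. \<forall>x\<in>V. cdist w x < d \<longrightarrow> cdist ((f ^^ k (r n)) x) (g (f x)) < e"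
        proof (intro exI[of _ d] conjI allI impI)
          fix e :: real assume "e > 0"
          then obtain N where N: "\<forall>n\<ge>N. \<forall>x\<in>U. cdist (f w) x < d' \<longrightarrow> cdist ((f ^^ k' (r' n)) x) (g x) < e"
            using d'(2) by blast
          show "\<exists>N. \<forall>n\<ge>N. \<forall>x\<in>V. cdist w x < d \<longrightarrow> cdist ((f ^^ k (r n)) x) (g (f x)) < e"
            using N d(2) by (auto simp: V_def eq)
        qed (use d in auto)
      qed
      then show ?thesis using rmono by blast
    qed
  qed
  then show ?thesis using Vo U(2) unfolding fatou_set_def V_def by blast
qed

lemma isCont_eps:
  fixes f :: "complex \<Rightarrow> complex"
  assumes "isCont f z" "r > 0"
  shows "\<exists>s>0. \<forall>x. cmod (x - z) < s \<longrightarrow> cmod (f x - f z) < r"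
proof -
  obtain s where "s > 0" "\<forall>x. x \<noteq> z \<and> cmod (x - z) < s \<longrightarrow> cmod (f x - f z) < r"
    using LIM_D[OF assms(1)[unfolded isCont_def] assms(2)] by blast
  then show ?thesis using assms(2) by (metis diff_self norm_zero)
qed

definition nbd :: "nat \<Rightarrow> nat \<Rightarrow> complex \<Rightarrow> complex \<Rightarrow> complex \<Rightarrow> complex" where
  "nbd m n a b z = of_nat m * (z - b) + of_nat n * (z - a)"

definition nnum :: "nat \<Rightarrow> nat \<Rightarrow> complex \<Rightarrow> complex \<Rightarrow> complex \<Rightarrow> complex \<Rightarrow> complex" where
  "nnum m n a b h z = z * nbd m n a b z - h * (z - a) * (z - b)"

definition Fm :: "complex \<Rightarrow> complex \<Rightarrow> nat \<Rightarrow> nat \<Rightarrow> complex \<Rightarrow> rsphere \<Rightarrow> rsphere" where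
  "Fm a b m n h v = (case v of None \<Rightarrow> None
     | Some z \<Rightarrow> if nbd m n a b z = 0 then None else Some (z - h * (z - a) * (z - b) / nbd m n a b z))"

lemma Fm_None [simp]: "Fm a b m n h None = None"
  by (simp add: Fm_def)

lemma Fm_Some: "Fm a b m n h (Some z) = (if nbd m n a b z = 0 then None else Some (nnum m n a b h z / nbd m n a b z))"
  by (simp add: Fm_def nnum_def field_simps)

lemma Fm_sym: "Fm a b m n h = Fm b a n m h"
  by (rule ext) (simp add: Fm_def nbd_def add.commute mult.commute mult.left_commute split: option.split)

lemma nbd_lin: "nbd m n a b z = of_nat (m + n) * z - (of_nat m * b + of_nat n * a)"
  by (simp add: nbd_def algebra_simps)

locale twoF =
  fixes a b :: complex and m n :: nat and h :: complex
  assumes ab: "a \<noteq> b" and m1: "m \<ge> 1" and n1: "n \<ge> 1" and h0: "h \<noteq> 0"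
    and hk: "h \<noteq> of_nat (m + n)"
begin

abbreviation "F \<equiv> Fm a b m n h"
abbreviation "B \<equiv> nbd m n a b"
abbreviation "NN \<equiv> nnum m n a b h"

definition z0 where "z0 = (of_nat m * b + of_nat n * a) / of_nat (m + n)"

lemma kpos: "(of_nat (m + n) :: complex) \<noteq> 0"
proof -
  have "m + n \<noteq> 0" using m1 by simp
  then show ?thesis by (simp only: of_nat_eq_0_iff) simp
qed

lemma B_eq: "B z = of_nat (m + n) * (z - z0)"
  using kpos by (simp add: nbd_lin z0_def field_simps)

lemma B_zero_iff: "B z = 0 \<longleftrightarrow> z = z0"
  using kpos by (simp add: B_eq)

lemma z0_ne_a: "z0 \<noteq> a"
proof
  assume "z0 = a"
  then have "of_nat m * b + of_nat n * a = of_nat (m + n) * a" using kpos by (simp add: z0_def field_simps)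
  then have "of_nat m * (b - a) = 0" by (simp add: algebra_simps)
  then show False using m1 ab by simp
qed

lemma z0_ne_b: "z0 \<noteq> b"
proof
  assume "z0 = b"
  then have "of_nat m * b + of_nat n * a = of_nat (m + n) * b" using kpos by (simp add: z0_def field_simps)
  then have "of_nat n * (a - b) = 0" by (simp add: algebra_simps)
  then show False using n1 ab by simp
qed

lemma NN_z0: "NN z0 \<noteq> 0"
  using B_zero_iff[of z0] h0 z0_ne_a z0_ne_b by (simp add: nnum_def)

lemma cont_NN: "isCont NN z"
  unfolding nnum_def nbd_def by (intro continuous_intros)

lemma cont_B: "isCont B z"
  unfolding nbd_def by (intro continuous_intros)

lemma scont_finite:
  assumes "B z \<noteq> 0"
  shows "scont F (Some z)"
  unfolding scont_def
proof (intro allI impI)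
  fix e :: real assume e: "e > 0"
  have c: "isCont (\<lambda>w. NN w / B w) z"
    using assms cont_NN cont_B by (intro continuous_intros) auto
  obtain s1 where s1: "s1 > 0" "\<forall>x. cmod (x - z) < s1 \<longrightarrow> cmod (NN x / B x - NN z / B z) < e / 2"
    using isCont_eps[OF c, of "e/2"] e by auto
  obtain s2 where s2: "s2 > 0" "\<forall>x. cmod (x - z) < s2 \<longrightarrow> cmod (B x - B z) < cmod (B z)"
    using isCont_eps[OF cont_B, of "cmod (B z)" z] assms by auto
  obtain d where d: "d > 0" "\<forall>v. cdist (Some z) v < d \<longrightarrow> (\<exists>w. v = Some w \<and> cmod (w - z) < min s1 s2)"
    using cdist_near_Some[of "min s1 s2" z] s1 s2 by auto
  show "\<exists>d>0. \<forall>y. cdist (Some z) y < d \<longrightarrow> cdist (F (Some z)) (F y) < e"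
  proof (intro exI[of _ d] conjI allI impI)
    fix y assume "cdist (Some z) y < d"
    then obtain w where w: "y = Some w" "cmod (w - z) < s1" "cmod (w - z) < s2" using d by auto
    have Bw: "B w \<noteq> 0"
    proof
      assume "B w = 0"
      then show False using s2(2)[rule_format, OF w(3)] by simp
    qed
    have "cdist (F (Some z)) (F y) \<le> 2 * cmod (NN z / B z - NN w / B w)"
      using assms Bw w(1) by (simp add: Fm_Some cdist_Some_le)
    also have "\<dots> < e"
    proof -
      have "cmod (NN w / B w - NN z / B z) < e / 2" using s1(2) w(2) by blast
      then show ?thesis by (simp add: norm_minus_commute)
    qed
    finally show "cdist (F (Some z)) (F y) < e" .
  qed (use d in auto)
qed

lemma scont_pole: "scont F (Some z0)"
  unfolding scont_def
proof (intro allI impI)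
  fix e :: real assume e: "e > 0"
  obtain R where R: "\<forall>w. cmod w > R \<longrightarrow> cdist None (Some w) < e" using cdist_None_small[OF e] by blast
  define c where "c = cmod (NN z0) / 2"
  have c0: "c > 0" using NN_z0 by (simp add: c_def)
  obtain s1 where s1: "s1 > 0" "\<forall>x. cmod (x - z0) < s1 \<longrightarrow> cmod (NN x - NN z0) < c"
    using isCont_eps[OF cont_NN c0] by blast
  define K where "K = real (m + n)"
  have K0: "K > 0" using m1 by (simp add: K_def)
  define s where "s = min s1 (c / (K * (\<bar>R\<bar> + 1)))"
  have s0: "s > 0" using s1 c0 K0 by (simp add: s_def add_pos_nonneg)
  obtain d where d: "d > 0" "\<forall>v. cdist (Some z0) v < d \<longrightarrow> (\<exists>w. v = Some w \<and> cmod (w - z0) < s)"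
    using cdist_near_Some[OF s0] by blast
  have FSz0: "F (Some z0) = None" using B_zero_iff by (simp add: Fm_Some)
  show "\<exists>d>0. \<forall>y. cdist (Some z0) y < d \<longrightarrow> cdist (F (Some z0)) (F y) < e"
  proof (intro exI[of _ d] conjI allI impI)
    fix y assume "cdist (Some z0) y < d"
    then obtain w where w: "y = Some w" "cmod (w - z0) < s" using d by auto
    show "cdist (F (Some z0)) (F y) < e"
    proof (cases "w = z0")
      case True then show ?thesis using w e by simp
    next
      case False
      then have Bw: "B w \<noteq> 0" using B_zero_iff by simp
      have NNw: "cmod (NN w) \<ge> c"
      proof -
        have "cmod (NN w - NN z0) < c" using s1 w(2) by (simp add: s_def)
        moreover have "cmod (NN z0) \<le> cmod (NN w) + cmod (NN w - NN z0)"
          by (metis add.commute norm_triangle_ineq4 norm_minus_commute diff_add_cancel norm_triangle_ineq)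
        ultimately show ?thesis by (simp add: c_def)
      qed
      have Bsmall: "cmod (B w) < c / (\<bar>R\<bar> + 1)"
      proof -
        have "cmod (B w) = K * cmod (w - z0)" by (simp only: B_eq K_def norm_mult norm_of_nat)
        also have "\<dots> < K * (c / (K * (\<bar>R\<bar> + 1)))"
        proof -
          have "cmod (w - z0) < c / (K * (\<bar>R\<bar> + 1))" using w(2) by (simp add: s_def)
          from mult_strict_left_mono[OF this K0] show ?thesis .
        qed
        also have "\<dots> = c / (\<bar>R\<bar> + 1)" using K0 by simp
        finally show ?thesis .
      qed
      have "R < cmod (NN w / B w)"
      proof -
        have pB: "cmod (B w) > 0" using Bw by simp
        have "R * cmod (B w) \<le> \<bar>R\<bar> * cmod (B w)" using pB by (simp add: mult_right_mono)
        also have "\<dots> < (\<bar>R\<bar> + 1) * cmod (B w)" using pB by simp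
        also have "\<dots> < (\<bar>R\<bar> + 1) * (c / (\<bar>R\<bar> + 1))"
          by (rule mult_strict_left_mono[OF Bsmall]) (simp add: add_pos_nonneg)
        also have "\<dots> = c" by (simp add: add_pos_nonneg)
        also have "\<dots> \<le> cmod (NN w)" by (rule NNw)
        finally show ?thesis using pB by (simp add: norm_divide pos_less_divide_eq)
      qed
      then show ?thesis using R FSz0 w(1) Bw by (simp add: Fm_Some)
    qed
  qed (use d in auto)
qed

definition al1 where "al1 = h * (a + b) - (of_nat m * b + of_nat n * a)"
definition al0 where "al0 = - h * a * b"

lemma NN_expand: "NN w = (of_nat (m + n) - h) * w^2 + al1 * w + al0"
  by (simp add: nnum_def nbd_def al1_def al0_def power2_eq_square algebra_simps)

lemma NN_large: "\<exists>R'. \<forall>w. cmod w > R' \<longrightarrow> B w = 0 \<or> cmod (NN w / B w) > R"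
proof -
  define \<kappa> where "\<kappa> = cmod (of_nat (m + n) - h)"
  have \<kappa>0: "\<kappa> > 0" using hk by (simp add: \<kappa>_def)
  define A1 where "A1 = cmod al1 + cmod al0"
  define C where "C = real (m + n) + cmod (of_nat m * b + of_nat n * a)"
  define R' where "R' = max 1 ((\<bar>R\<bar> * C + A1) / \<kappa>)"
  have "cmod (NN w / B w) > R" if w: "cmod w > R'" and Bw: "B w \<noteq> 0" for w
  proof -
    have w1: "cmod w \<ge> 1" using w by (simp add: R'_def)
    have big: "\<kappa> * cmod w > \<bar>R\<bar> * C + A1"
      using w \<kappa>0 by (simp add: R'_def pos_divide_less_eq mult.commute)
    have "cmod (al1 * w + al0) \<le> cmod al1 * cmod w + cmod al0"
      using norm_triangle_ineq[of "al1 * w" al0] by (simp add: norm_mult)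
    also have "\<dots> \<le> cmod al1 * cmod w + cmod al0 * cmod w"
      using w1 mult_left_mono[OF w1, of "cmod al0"] by simp
    finally have t1: "cmod (al1 * w + al0) \<le> A1 * cmod w" by (simp add: A1_def algebra_simps)
    have "\<kappa> * (cmod w)^2 = cmod ((of_nat (m + n) - h) * w^2)"
      by (simp add: \<kappa>_def norm_mult norm_power)
    also have "\<dots> \<le> cmod (NN w) + cmod (al1 * w + al0)"
    proof -
      have "(of_nat (m + n) - h) * w^2 = NN w - (al1 * w + al0)" by (simp add: NN_expand)
      then show ?thesis using norm_triangle_ineq4[of "NN w" "al1 * w + al0"] by simp
    qed
    finally have t2: "cmod (NN w) \<ge> (\<kappa> * cmod w - A1) * cmod w"
      using t1 by (simp add: power2_eq_square algebra_simps)
    have "cmod (B w) \<le> real (m + n) * cmod w + cmod (of_nat m * b + of_nat n * a)"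
      unfolding nbd_lin using norm_triangle_ineq4[of "of_nat (m + n) * w" "of_nat m * b + of_nat n * a"]
      by (simp only: norm_mult norm_of_nat)
    also have "\<dots> \<le> C * cmod w"
      using mult_left_mono[OF w1, of "cmod (of_nat m * b + of_nat n * a)"] by (simp add: C_def algebra_simps)
    finally have t3: "cmod (B w) \<le> C * cmod w" .
    have "\<bar>R\<bar> * cmod (B w) \<le> \<bar>R\<bar> * C * cmod w"
      using mult_left_mono[OF t3, of "\<bar>R\<bar>"] by (simp add: mult.assoc)
    also have "\<dots> < (\<kappa> * cmod w - A1) * cmod w"
    proof -
      have "\<bar>R\<bar> * C < \<kappa> * cmod w - A1" using big by simp
      moreover have "0 < cmod w" using w1 by linarith
      ultimately show ?thesis by (rule mult_strict_right_mono)
    qed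
    also have "\<dots> \<le> cmod (NN w)" by (rule t2)
    finally have "\<bar>R\<bar> * cmod (B w) < cmod (NN w)" .
    then have "\<bar>R\<bar> < cmod (NN w / B w)" using Bw by (simp add: norm_divide pos_less_divide_eq)
    then show ?thesis by simp
  qed
  then show ?thesis by blast
qed

lemma scont_None: "scont F None"
  unfolding scont_def
proof (intro allI impI)
  fix e :: real assume e: "e > 0"
  obtain R where R: "\<forall>w. cmod w > R \<longrightarrow> cdist None (Some w) < e" using cdist_None_small[OF e] by blast
  obtain R' where R': "\<forall>w. cmod w > R' \<longrightarrow> B w = 0 \<or> cmod (NN w / B w) > R" using NN_large by blast
  obtain d where d: "d > 0" "\<forall>v. cdist None v < d \<longrightarrow> v = None \<or> (\<exists>w. v = Some w \<and> cmod w > R')"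
    using cdist_near_None by blast
  show "\<exists>d>0. \<forall>y. cdist None y < d \<longrightarrow> cdist (F None) (F y) < e"
  proof (intro exI[of _ d] conjI allI impI)
    fix y assume "cdist None y < d"
    then have "y = None \<or> (\<exists>w. y = Some w \<and> cmod w > R')" using d by auto
    then show "cdist (F None) (F y) < e"
    proof
      assume "\<exists>w. y = Some w \<and> cmod w > R'"
      then obtain w where w: "y = Some w" "cmod w > R'" by blast
      show ?thesis using R'[rule_format, OF w(2)] R w(1) e by (auto simp: Fm_Some)
    qed (use e in simp)
  qed (use d in auto)
qed

lemma scont_F: "scont F x"
proof (cases x)
  case None then show ?thesis using scont_None by simp
next
  case (Some z)
  then show ?thesis using scont_finite[of z] scont_pole B_zero_iff by (cases "z = z0") auto
qed

end

lemma contract_orbit: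
  assumes ab: "a \<noteq> b" and rho: "0 < \<rho>" "\<rho> < 1" and q: "0 \<le> q" "q < 1"
    and step: "\<And>z. cmod (z - a) \<le> \<rho> * cmod (z - b) \<Longrightarrow>
        \<exists>y. f (Some z) = Some y \<and> cmod (y - a) * cmod (z - b) \<le> q * cmod (z - a) * cmod (y - b)"
    and z: "cmod (z - a) \<le> \<rho> * cmod (z - b)"
  shows "\<exists>y. (f ^^ n) (Some z) = Some y \<and> cmod (y - a) \<le> \<rho> * q ^ n * cmod (y - b)"
proof (induction n)
  case 0 then show ?case using z by simp
next
  case (Suc n)
  then obtain y where y: "(f ^^ n) (Some z) = Some y" "cmod (y - a) \<le> \<rho> * q ^ n * cmod (y - b)" by blast
  have qn: "q ^ n \<le> 1" using q by (simp add: power_le_one)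
  have yreg: "cmod (y - a) \<le> \<rho> * cmod (y - b)"
    using y(2) mult_left_mono[OF qn, of \<rho>] rho mult_right_mono[of "\<rho> * q ^ n" \<rho> "cmod (y - b)"]
    by (simp add: order_trans)
  have yb: "y \<noteq> b"
  proof
    assume "y = b" then have "cmod (b - a) \<le> 0" using y(2) by simp
    then show False using ab by simp
  qed
  obtain y' where y': "f (Some y) = Some y'" "cmod (y' - a) * cmod (y - b) \<le> q * cmod (y - a) * cmod (y' - b)"
    using step[OF yreg] by blast
  have "cmod (y' - a) * cmod (y - b) \<le> q * (\<rho> * q ^ n * cmod (y - b)) * cmod (y' - b)"
    using y'(2) y(2) mult_left_mono[OF y(2), of q] q(1)
    by (smt (verit) mult_right_mono norm_ge_zero)
  then have "cmod (y' - a) * cmod (y - b) \<le> (\<rho> * q ^ Suc n * cmod (y' - b)) * cmod (y - b)"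
    by (simp add: algebra_simps)
  then have "cmod (y' - a) \<le> \<rho> * q ^ Suc n * cmod (y' - b)"
    using yb by simp
  then show ?case using y(1) y'(1) by simp
qed

lemma contract_unif:
  assumes ab: "a \<noteq> b" and rho: "0 < \<rho>" "\<rho> < 1" and q: "0 \<le> q" "q < 1"
    and step: "\<And>z. cmod (z - a) \<le> \<rho> * cmod (z - b) \<Longrightarrow>
        \<exists>y. f (Some z) = Some y \<and> cmod (y - a) * cmod (z - b) \<le> q * cmod (z - a) * cmod (y - b)"
    and e: "e > 0"
  shows "\<exists>N. \<forall>n\<ge>N. \<forall>z. cmod (z - a) \<le> \<rho> * cmod (z - b) \<longrightarrow> cdist ((f ^^ n) (Some z)) (Some a) < e"
proof -
  define D where "D = 2 * \<rho> * cmod (a - b) / (1 - \<rho>)"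
  have D0: "D > 0" using rho ab by (simp add: D_def)
  obtain N where N: "q ^ N < e / D" using real_arch_pow_inv[of "e / D" q] e D0 q by auto
  have "cdist ((f ^^ n) (Some z)) (Some a) < e" if n: "n \<ge> N" and z: "cmod (z - a) \<le> \<rho> * cmod (z - b)" for n z
  proof -
    obtain y where y: "(f ^^ n) (Some z) = Some y" "cmod (y - a) \<le> \<rho> * q ^ n * cmod (y - b)"
      using contract_orbit[OF ab rho q step z] by blast
    have qn: "q ^ n \<le> q ^ N" using n q by (simp add: power_decreasing)
    have qn1: "q ^ n \<le> 1" using q by (simp add: power_le_one)
    have "cmod (y - b) \<le> cmod (y - a) + cmod (a - b)"
      by (metis diff_add_cancel norm_triangle_ineq add.commute add_diff_eq)
    then have "cmod (y - a) \<le> \<rho> * q ^ n * (cmod (y - a) + cmod (a - b))"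
      using y(2) mult_left_mono[of "cmod (y - b)" _ "\<rho> * q ^ n"] rho q by (smt (verit) zero_le_mult_iff zero_le_power)
    then have "cmod (y - a) * (1 - \<rho> * q ^ n) \<le> \<rho> * q ^ n * cmod (a - b)"
      by (simp add: algebra_simps)
    moreover have "1 - \<rho> \<le> 1 - \<rho> * q ^ n"
      using mult_left_mono[OF qn1, of \<rho>] rho by simp
    ultimately have "cmod (y - a) * (1 - \<rho>) \<le> \<rho> * q ^ n * cmod (a - b)"
      by (smt (verit) mult_left_mono norm_ge_zero)
    then have ya: "cmod (y - a) \<le> \<rho> * q ^ n * cmod (a - b) / (1 - \<rho>)"
      using rho by (simp add: pos_le_divide_eq)
    have "cdist ((f ^^ n) (Some z)) (Some a) \<le> 2 * cmod (y - a)"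
      using y(1) cdist_Some_le by simp
    also have "\<dots> \<le> q ^ n * D"
    proof -
      have "q ^ n * D = 2 * (\<rho> * q ^ n * cmod (a - b) / (1 - \<rho>))" by (simp add: D_def)
      then show ?thesis using ya by linarith
    qed
    also have "\<dots> \<le> q ^ N * D" using qn D0 by simp
    also have "\<dots> < e" using N D0 by (simp add: pos_less_divide_eq)
    finally show ?thesis .
  qed
  then show ?thesis by blast
qed

lemma contract_fatou:
  assumes ab: "a \<noteq> b" and rho: "0 < \<rho>" "\<rho> < 1" and q: "0 \<le> q" "q < 1"
    and step: "\<And>z. cmod (z - a) \<le> \<rho> * cmod (z - b) \<Longrightarrow>
        \<exists>y. f (Some z) = Some y \<and> cmod (y - a) * cmod (z - b) \<le> q * cmod (z - a) * cmod (y - b)"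
    and z0: "cmod (z0 - a) < \<rho> * cmod (z0 - b)"
  shows "Some z0 \<in> fatou_set f"
proof -
  define U where "U = {Some z |z. cmod (z - a) < \<rho> * cmod (z - b)}"
  have Uo: "sphere_open U"
    unfolding sphere_open_def
  proof
    fix v assume "v \<in> U"
    then obtain z where z: "v = Some z" "cmod (z - a) < \<rho> * cmod (z - b)" by (auto simp: U_def)
    define \<epsilon> where "\<epsilon> = (\<rho> * cmod (z - b) - cmod (z - a)) / (2 * (1 + \<rho>))"
    have \<epsilon>0: "\<epsilon> > 0" using z(2) rho by (simp add: \<epsilon>_def)
    obtain d where d: "d > 0" "\<forall>v. cdist (Some z) v < d \<longrightarrow> (\<exists>w. v = Some w \<and> cmod (w - z) < \<epsilon>)"
      using cdist_near_Some[OF \<epsilon>0] by blast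
    have "w \<in> U" if "cdist v w < d" for w
    proof -
      have "\<exists>x. w = Some x \<and> cmod (x - z) < \<epsilon>" using d(2) that z(1) by auto
      then obtain x where x: "w = Some x" "cmod (x - z) < \<epsilon>" by blast
      have t1: "cmod (x - a) \<le> cmod (z - a) + cmod (x - z)"
        by (metis add.commute diff_add_cancel norm_triangle_ineq add_diff_eq)
      have t2: "cmod (z - b) \<le> cmod (x - b) + cmod (x - z)"
        by (metis add.commute diff_add_cancel norm_triangle_ineq add_diff_eq norm_minus_commute)
      have t3: "2 * \<epsilon> + 2 * (\<epsilon> * \<rho>) = \<rho> * cmod (z - b) - cmod (z - a)"
      proof -
        have "2 * \<epsilon> + 2 * (\<epsilon> * \<rho>) = \<epsilon> * (2 * (1 + \<rho>))" by (simp add: algebra_simps)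
        also have "\<dots> = \<rho> * cmod (z - b) - cmod (z - a)" using rho by (simp add: \<epsilon>_def)
        finally show ?thesis .
      qed
      have t4: "\<rho> * cmod (z - b) \<le> \<rho> * cmod (x - b) + \<rho> * cmod (x - z)"
        using t2 rho mult_left_mono[of "cmod (z - b)" "cmod (x - b) + cmod (x - z)" \<rho>]
        by (simp add: algebra_simps)
      have t5: "\<rho> * cmod (x - z) \<le> \<epsilon> * \<rho>"
        using x(2) rho by simp
      have t6: "\<epsilon> * \<rho> \<ge> 0" using \<epsilon>0 rho by auto
      have "cmod (x - a) < \<rho> * cmod (x - b)"
        using t1 t3 t4 t5 t6 x(2) \<epsilon>0 by linarith
      then show ?thesis using x by (auto simp: U_def)
    qed
    then show "\<exists>e>0. \<forall>w. cdist v w < e \<longrightarrow> w \<in> U" using d by blast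
  qed
  have "\<exists>N. \<forall>n\<ge>N. \<forall>v\<in>U. cdist ((f ^^ n) v) (Some a) < e" if e0: "e > 0" for e
  proof -
    obtain N where "\<forall>n\<ge>N. \<forall>z. cmod (z - a) \<le> \<rho> * cmod (z - b) \<longrightarrow> cdist ((f ^^ n) (Some z)) (Some a) < e"
      using contract_unif[OF ab rho q step e0] by blast
    then have "\<forall>n\<ge>N. \<forall>v\<in>U. cdist ((f ^^ n) v) (Some a) < e"
      unfolding U_def by (auto intro: less_imp_le)
    then show ?thesis by blast
  qed
  moreover have "Some z0 \<in> U" using z0 by (auto simp: U_def)
  ultimately show ?thesis using fatou_from_uniform[OF Uo, of "Some z0" f "Some a"] by blast
qed

lemma rat_ext_smult:
  assumes "u \<noteq> 0"
  shows "rat_ext (smult u P) (smult u Q) = rat_ext P Q"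
  using assms by (auto simp: rat_ext_def fun_eq_iff split: option.split)

lemma poly_decomp_two:
  fixes p :: "complex poly"
  assumes "p \<noteq> 0" "a \<noteq> b" "{z. poly p z = 0} = {a, b}"
  shows "p = smult (lead_coeff p) ([:-a,1:] ^ order a p * [:-b,1:] ^ order b p)"
proof -
  have "p = smult (lead_coeff p) (\<Prod>z\<in>{a,b}. [:-z, 1:] ^ order z p)"
    using complex_poly_decompose[of p] assms(3) by simp
  also have "(\<Prod>z\<in>{a,b}. [:-z, 1:] ^ order z p) = [:-a,1:] ^ order a p * [:-b,1:] ^ order b p"
    using assms(2) by simp
  finally show ?thesis .
qed

lemma relaxed_newton_Fm:
  fixes p :: "complex poly"
  assumes p0: "p \<noteq> 0" and ab: "a \<noteq> b" and roots: "{z. poly p z = 0} = {a, b}"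
    and h0: "h \<noteq> 0" and hk: "h \<noteq> of_nat (order a p + order b p)"
  shows "relaxed_newton h p = Fm a b (order a p) (order b p) h"
proof -
  define m where "m = order a p"
  define n where "n = order b p"
  have m1: "m \<ge> 1" using roots p0 order_root[of p a] by (auto simp: m_def)
  have n1: "n \<ge> 1" using roots p0 order_root[of p b] by (auto simp: n_def)
  interpret twoF a b m n h using ab m1 n1 h0 hk by unfold_locales (auto simp: m_def n_def)
  obtain m' where m': "m = Suc m'" using m1 by (cases m) auto
  obtain n' where n': "n = Suc n'" using n1 by (cases n) auto
  define l where "l = lead_coeff p"
  have l0: "l \<noteq> 0" using p0 by (simp add: l_def)
  define Xa where "Xa = [:-a, 1:]"
  define Xb where "Xb = [:-b, 1:]"
  define D where "D = smult l (Xa ^ m' * Xb ^ n')"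
  define Bp where "Bp = smult (of_nat m) Xb + smult (of_nat n) Xa"
  define Ap where "Ap = [:0, 1:] * Bp - smult h (Xa * Xb)"
  have peq: "p = smult l (Xa ^ m * Xb ^ n)"
    using poly_decomp_two[OF p0 ab roots] by (simp add: l_def Xa_def Xb_def m_def n_def)
  have pd: "pderiv p = D * Bp"
  proof -
    have "pderiv p = smult l (Xa ^ m * pderiv (Xb ^ n) + Xb ^ n * pderiv (Xa ^ m))"
      by (simp add: peq pderiv_smult pderiv_mult)
    also have "\<dots> = smult l (Xa ^ m * smult (of_nat n) (Xb ^ n') + Xb ^ n * smult (of_nat m) (Xa ^ m'))"
    proof -
      have pa: "pderiv Xa = 1" by (simp add: Xa_def pderiv_pCons)
      have pb: "pderiv Xb = 1" by (simp add: Xb_def pderiv_pCons)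
      have "pderiv (Xb ^ n) = smult (of_nat n) (Xb ^ n')" unfolding n' pderiv_power_Suc pb by simp
      moreover have "pderiv (Xa ^ m) = smult (of_nat m) (Xa ^ m')" unfolding m' pderiv_power_Suc pa by simp
      ultimately show ?thesis by simp
    qed
    also have "\<dots> = D * Bp"
      by (simp add: D_def Bp_def m' n' algebra_simps smult_add_right smult_add_left)
    finally show ?thesis .
  qed
  have pD: "p = D * (Xa * Xb)"
    by (simp add: peq D_def m' n' algebra_simps)
  have P0: "[:0, 1:] * pderiv p - smult h p = D * Ap"
  proof -
    have sp: "smult h p = D * smult h (Xa * Xb)" by (subst pD) simp
    show ?thesis unfolding pd sp Ap_def by (simp add: algebra_simps)
  qed
  have D0: "D \<noteq> 0" using l0 by (simp add: D_def Xa_def Xb_def)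
  have polyB: "poly Bp z = nbd m n a b z" for z
    by (simp add: Bp_def Xa_def Xb_def nbd_def algebra_simps)
  have polyA: "poly Ap z = nnum m n a b h z" for z
    by (simp add: Ap_def polyB Xa_def Xb_def nnum_def algebra_simps)
  have Bp_eq: "Bp = [:-(of_nat m * b + of_nat n * a), of_nat (m + n):]"
    by (simp add: Bp_def Xa_def Xb_def algebra_simps)
  have degB: "degree Bp = 1" using kpos by (simp add: Bp_eq)
  have Ap_eq: "Ap = [:al0, al1, of_nat (m + n) - h:]"
  proof -
    have "poly Ap = poly [:al0, al1, of_nat (m + n) - h:]"
      by (rule ext) (simp add: polyA NN_expand power2_eq_square algebra_simps)
    then show ?thesis by (simp add: poly_eq_poly_eq_iff)
  qed
  have degA: "degree Ap = 2" using hk by (simp add: Ap_eq m_def n_def)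
  have cop: "gcd Ap Bp = 1"
  proof -
    define g where "g = gcd Ap Bp"
    have gA: "g dvd Ap" and gB: "g dvd Bp" by (simp_all add: g_def)
    have B0: "Bp \<noteq> 0" using degB by auto
    have "degree g = 0"
    proof (rule ccontr)
      assume "degree g \<noteq> 0"
      then have "\<not> constant (poly g)" by (simp add: constant_degree)
      then obtain x where x: "poly g x = 0" using fundamental_theorem_of_algebra by blast
      have "poly Bp x = 0" using gB x by (metis dvd_def mult_eq_0_iff poly_mult)
      moreover have "poly Ap x = 0" using gA x by (metis dvd_def mult_eq_0_iff poly_mult)
      ultimately show False using polyA polyB B_zero_iff NN_z0 by metis
    qed
    moreover have "g \<noteq> 0" using B0 gB by (auto simp: g_def)
    ultimately have "is_unit g" by (metis degree_eq_zeroE is_unit_poly_iff is_unit_triv pCons_eq_0_iff)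
    then show ?thesis unfolding g_def by (simp add: is_unit_gcd coprime_imp_gcd_eq_1)
  qed
  have G: "gcd (D * Ap) (D * Bp) = normalize D"
    by (simp add: gcd_mult_left cop)
  define u where "u = lead_coeff D"
  have u: "unit_factor D = [:u:]" "u \<noteq> 0"
    using D0 by (simp_all add: u_def unit_factor_poly_def unit_factor_complex_def)
  have nD0: "normalize D \<noteq> 0" using D0 by simp
  have divA: "(D * Ap) div normalize D = smult u Ap"
  proof -
    have Dn: "D = normalize D * [:u:]" using normalize_mult_unit_factor[of D] u(1) by simp
    have "D * Ap = normalize D * smult u Ap" by (subst Dn) (simp add: mult.assoc)
    then show ?thesis using nonzero_mult_div_cancel_left[OF nD0, of "smult u Ap"] by simp
  qed
  have divB: "(D * Bp) div normalize D = smult u Bp"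
  proof -
    have Dn: "D = normalize D * [:u:]" using normalize_mult_unit_factor[of D] u(1) by simp
    have "D * Bp = normalize D * smult u Bp" by (subst Dn) (simp add: mult.assoc)
    then show ?thesis using nonzero_mult_div_cancel_left[OF nD0, of "smult u Bp"] by simp
  qed
  have "relaxed_newton h p = rat_ext Ap Bp"
    unfolding relaxed_newton_def Let_def P0 unfolding pd G divA divB rat_ext_smult[OF u(2)] ..
  also have "\<dots> = Fm a b m n h"
    by (auto simp: fun_eq_iff rat_ext_def Fm_Some polyA polyB degA degB split: option.split)
  finally show ?thesis by (simp add: m_def n_def)
qed

lemma sq_diff_re: "(cmod u)\<^sup>2 - (cmod w)\<^sup>2 = Re ((u - w) * cnj (u + w))"
  unfolding cmod_power2 by (simp add: power2_eq_square algebra_simps)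

context twoF begin

definition ra where "ra z = (of_nat m - h) * (z - b) + of_nat n * (z - a)"
definition rb where "rb z = of_nat m * (z - b) + (of_nat n - h) * (z - a)"

lemma F_step:
  assumes Bz: "B z \<noteq> 0" and r: "cmod (ra z) \<le> q * cmod (rb z)" and q: "q \<ge> 0"
  shows "\<exists>y. F (Some z) = Some y \<and> cmod (y - a) * cmod (z - b) \<le> q * cmod (z - a) * cmod (y - b)"
proof -
  define y where "y = z - h * (z - a) * (z - b) / B z"
  have Fz: "F (Some z) = Some y" using Bz by (simp add: Fm_def y_def)
  have ya: "y - a = (z - a) * ra z / B z"
    using Bz by (simp add: y_def ra_def nbd_def field_simps)
  have yb: "y - b = (z - b) * rb z / B z"
    using Bz by (simp add: y_def rb_def nbd_def field_simps)
  have "cmod (y - a) * cmod (z - b) = cmod (z - a) * cmod (z - b) / cmod (B z) * cmod (ra z)"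
    by (simp add: ya norm_mult norm_divide)
  also have "\<dots> \<le> cmod (z - a) * cmod (z - b) / cmod (B z) * (q * cmod (rb z))"
    by (rule mult_left_mono[OF r]) simp
  also have "\<dots> = q * cmod (z - a) * cmod (y - b)"
    by (simp add: yb norm_mult norm_divide)
  finally show ?thesis using Fz by blast
qed

lemma attracting_a:
  assumes hm: "cmod (h - of_nat m) < of_nat m"
  shows "Some a \<in> fatou_set F"
proof -
  define \<phi> where "\<phi> z = ra z / rb z" for z
  have rba: "rb a = of_nat m * (a - b)" by (simp add: rb_def)
  have rba0: "rb a \<noteq> 0" using rba m1 ab by simp
  have \<phi>a: "cmod (\<phi> a) < 1"
  proof -
    have "\<phi> a = (of_nat m - h) / of_nat m" using ab m1 by (simp add: \<phi>_def ra_def rb_def)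
    then show ?thesis using hm m1 by (simp add: norm_divide norm_minus_commute)
  qed
  define q where "q = (1 + cmod (\<phi> a)) / 2"
  have q: "0 \<le> q" "q < 1" "cmod (\<phi> a) < q" using \<phi>a by (auto simp: q_def)
  have cphi: "isCont \<phi> a" unfolding \<phi>_def ra_def rb_def using rba0
    by (intro continuous_intros) (auto simp: rb_def)
  have crb: "isCont rb a" unfolding rb_def by (intro continuous_intros)
  have cB: "isCont B a" by (rule cont_B)
  have Ba: "B a \<noteq> 0" using B_zero_iff z0_ne_a by metis
  obtain s1 where s1: "s1 > 0" "\<forall>x. cmod (x - a) < s1 \<longrightarrow> cmod (\<phi> x - \<phi> a) < q - cmod (\<phi> a)"
    using isCont_eps[OF cphi, of "q - cmod (\<phi> a)"] q by auto
  obtain s2 where s2: "s2 > 0" "\<forall>x. cmod (x - a) < s2 \<longrightarrow> cmod (rb x - rb a) < cmod (rb a)"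
    using isCont_eps[OF crb, of "cmod (rb a)"] rba0 by auto
  obtain s3 where s3: "s3 > 0" "\<forall>x. cmod (x - a) < s3 \<longrightarrow> cmod (B x - B a) < cmod (B a)"
    using isCont_eps[OF cB, of "cmod (B a)"] Ba by auto
  define s where "s = min s1 (min s2 s3)"
  have s0: "s > 0" using s1 s2 s3 by (simp add: s_def)
  define \<rho> where "\<rho> = min (1/2) (s / (4 * cmod (a - b)))"
  have rho: "0 < \<rho>" "\<rho> < 1" using s0 ab by (auto simp: \<rho>_def)
  have step: "\<exists>y. F (Some z) = Some y \<and> cmod (y - a) * cmod (z - b) \<le> q * cmod (z - a) * cmod (y - b)"
    if z: "cmod (z - a) \<le> \<rho> * cmod (z - b)" for z
  proof -
    have "cmod (z - b) \<le> cmod (z - a) + cmod (a - b)"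
      by (metis diff_add_cancel norm_triangle_ineq add.commute add_diff_eq)
    then have "cmod (z - a) \<le> \<rho> * (cmod (z - a) + cmod (a - b))"
      using z rho by (smt (verit) mult_left_mono)
    moreover have "\<rho> \<le> 1/2" by (simp add: \<rho>_def)
    ultimately have "cmod (z - a) \<le> 2 * \<rho> * cmod (a - b)"
    proof -
      assume h1: "cmod (z - a) \<le> \<rho> * (cmod (z - a) + cmod (a - b))" and h2: "\<rho> \<le> 1/2"
      have "cmod (z - a) * (1 - \<rho>) \<le> \<rho> * cmod (a - b)" using h1 by (simp add: algebra_simps)
      moreover have "cmod (z - a) * (1/2) \<le> cmod (z - a) * (1 - \<rho>)"
        using h2 by (intro mult_left_mono) auto
      ultimately show ?thesis by linarith
    qed
    also have "\<dots> \<le> 2 * (s / (4 * cmod (a - b))) * cmod (a - b)"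
      by (intro mult_right_mono mult_left_mono) (auto simp: \<rho>_def)
    also have "\<dots> = s / 2" using ab by simp
    finally have za: "cmod (z - a) < s" using s0 by simp
    have rbz: "rb z \<noteq> 0"
    proof
      assume "rb z = 0" then show False using s2(2)[rule_format, of z] za by (simp add: s_def)
    qed
    have Bz: "B z \<noteq> 0"
    proof
      assume "B z = 0" then show False using s3(2)[rule_format, of z] za by (simp add: s_def)
    qed
    have "cmod (\<phi> z - \<phi> a) < q - cmod (\<phi> a)" using s1(2)[rule_format, of z] za by (simp add: s_def)
    then have "cmod (\<phi> z) < q"
      by (metis add.commute diff_add_cancel less_diff_eq norm_triangle_lt)
    then have "cmod (ra z) \<le> q * cmod (rb z)"
      using rbz by (simp add: \<phi>_def norm_divide divide_less_eq)
    then show ?thesis using F_step[OF Bz _ q(1)] by blast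
  qed
  show ?thesis
  proof (rule contract_fatou[OF ab rho q(1) q(2) step])
    have "cmod (a - b) > 0" using ab by simp
    then show "cmod (a - a) < \<rho> * cmod (a - b)" using rho by simp
  qed
qed

lemma ra_rb_sq:
  assumes mn: "m = n" and hr: "h = of_real r"
  shows "(cmod (ra z))\<^sup>2 - (cmod (rb z))\<^sup>2 = r * (2 * real m - r) * ((cmod (z - a))\<^sup>2 - (cmod (z - b))\<^sup>2)"
proof -
  have d: "ra z - rb z = h * (b - a)" unfolding ra_def rb_def by (simp add: mn algebra_simps)
  have p: "ra z + rb z = (2 * of_nat m - h) * ((z - a) + (z - b))" unfolding ra_def rb_def by (simp add: mn algebra_simps)
  have "(cmod (ra z))\<^sup>2 - (cmod (rb z))\<^sup>2 = Re (h * (b - a) * cnj ((2 * of_nat m - h) * ((z - a) + (z - b))))"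
    by (simp add: sq_diff_re d p)
  also have "\<dots> = r * (2 * real m - r) * Re (((z - a) - (z - b)) * cnj ((z - a) + (z - b)))"
    by (simp add: hr algebra_simps)
  also have "\<dots> = r * (2 * real m - r) * ((cmod (z - a))\<^sup>2 - (cmod (z - b))\<^sup>2)"
    by (simp add: sq_diff_re)
  finally show ?thesis .
qed

lemma side_a:
  assumes mn: "m = n" and hr: "h = of_real r" and r0: "0 < r" and r1: "r < 2 * real m"
    and z0: "cmod (w0 - a) < cmod (w0 - b)"
  shows "Some w0 \<in> fatou_set F"
    and "\<And>e. e > 0 \<Longrightarrow> \<exists>N. \<forall>k\<ge>N. cdist ((F ^^ k) (Some w0)) (Some a) < e"
proof -
  have w0b: "w0 \<noteq> b" using z0 by auto
  define \<rho> where "\<rho> = (cmod (w0 - a) / cmod (w0 - b) + 1) / 2"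
  have t: "0 \<le> cmod (w0 - a) / cmod (w0 - b)" "cmod (w0 - a) / cmod (w0 - b) < 1"
    using z0 w0b by (auto simp: divide_less_eq)
  have gen: "\<And>x::real. 0 \<le> x \<Longrightarrow> x < 1 \<Longrightarrow> 0 < (x + 1) / 2 \<and> (x + 1) / 2 < 1" by auto
  have rho1: "0 < \<rho>" using gen[OF t] unfolding \<rho>_def by blast
  have rho2: "\<rho> < 1" using gen[OF t] unfolding \<rho>_def by blast
  note rho = rho1 rho2
  have w0in: "cmod (w0 - a) < \<rho> * cmod (w0 - b)"
    using z0 w0b by (simp add: \<rho>_def field_simps)
  define S where "S = {z. cmod (z - a) \<le> \<rho> * cmod (z - b)}"
  have strict: "cmod (z - a) < cmod (z - b)" if "z \<in> S" for z
  proof -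
    have zb: "z \<noteq> b"
    proof
      assume "z = b" then have "cmod (b - a) \<le> 0" using that by (simp add: S_def)
      then show False using ab by simp
    qed
    then have "\<rho> * cmod (z - b) < cmod (z - b)" using rho by simp
    then show ?thesis using that by (simp add: S_def)
  qed
  have rsq: "(cmod (ra z))\<^sup>2 < (cmod (rb z))\<^sup>2" if "z \<in> S" for z
  proof -
    have "(cmod (z - a))\<^sup>2 < (cmod (z - b))\<^sup>2" using strict[OF that] by (simp add: power_strict_mono)
    moreover have "r * (2 * real m - r) > 0" using r0 r1 by simp
    ultimately show ?thesis using ra_rb_sq[OF mn hr, of z] by (smt (verit) mult_pos_neg)
  qed
  have rb0: "rb z \<noteq> 0" if "z \<in> S" for z using rsq[OF that] by auto
  define \<phi> where "\<phi> z = cmod (ra z) / cmod (rb z)" for z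
  have \<phi>1: "\<phi> z < 1" if "z \<in> S" for z
  proof -
    have "cmod (ra z) < cmod (rb z)" using rsq[OF that] by (simp add: power_less_imp_less_base)
    then show ?thesis using rb0[OF that] by (simp add: \<phi>_def)
  qed
  have cS: "compact S"
  proof -
    have "closed S" unfolding S_def
      by (intro closed_Collect_le continuous_intros)
    moreover have "S \<subseteq> cball a (\<rho> * cmod (a - b) / (1 - \<rho>))"
    proof
      fix z assume z: "z \<in> S"
      have "cmod (z - b) \<le> cmod (z - a) + cmod (a - b)"
        by (metis diff_add_cancel norm_triangle_ineq add.commute add_diff_eq)
      then have "cmod (z - a) \<le> \<rho> * (cmod (z - a) + cmod (a - b))"
        using z rho by (simp add: S_def) (smt (verit) mult_left_mono)
      then have "cmod (z - a) * (1 - \<rho>) \<le> \<rho> * cmod (a - b)" by (simp add: algebra_simps)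
      then show "z \<in> cball a (\<rho> * cmod (a - b) / (1 - \<rho>))"
        using rho by (simp add: dist_norm norm_minus_commute pos_le_divide_eq)
    qed
    then have "bounded S" by (rule bounded_subset[OF bounded_cball])
    ultimately show ?thesis by (simp add: compact_eq_bounded_closed)
  qed
  have aS: "a \<in> S" using rho by (simp add: S_def)
  have contS: "continuous_on S \<phi>"
    unfolding \<phi>_def ra_def rb_def using rb0 unfolding rb_def
    by (intro continuous_intros) auto
  obtain x where x: "x \<in> S" "\<forall>y\<in>S. \<phi> y \<le> \<phi> x"
    using continuous_attains_sup[OF cS _ contS] aS by blast
  define q where "q = \<phi> x"
  have q: "0 \<le> q" "q < 1" using \<phi>1[OF x(1)] by (auto simp: q_def \<phi>_def)
  have step: "\<exists>y. F (Some z) = Some y \<and> cmod (y - a) * cmod (z - b) \<le> q * cmod (z - a) * cmod (y - b)"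
    if z: "cmod (z - a) \<le> \<rho> * cmod (z - b)" for z
  proof -
    have zS: "z \<in> S" using z by (simp add: S_def)
    have Bz: "B z \<noteq> 0"
    proof
      assume "B z = 0"
      then have "of_nat m * ((z - b) + (z - a)) = 0" by (simp add: nbd_def mn[symmetric] algebra_simps)
      then have "(z - b) + (z - a) = 0" using m1 by simp
      then have "z - a = - (z - b)" by (simp only: add_eq_0_iff)
      then have "cmod (z - a) = cmod (- (z - b))" by (rule arg_cong)
      then have "cmod (z - a) = cmod (z - b)" by (simp only: norm_minus_cancel)
      then show False using strict[OF zS] by simp
    qed
    have "\<phi> z \<le> q" using x(2) zS by (simp add: q_def)
    then have "cmod (ra z) \<le> q * cmod (rb z)" using rb0[OF zS] by (simp add: \<phi>_def divide_le_eq)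
    then show ?thesis using F_step[OF Bz _ q(1)] by blast
  qed
  show "Some w0 \<in> fatou_set F"
    by (rule contract_fatou[OF ab rho q step w0in])
  fix e :: real assume e: "e > 0"
  obtain N where N: "\<forall>n\<ge>N. \<forall>z. cmod (z - a) \<le> \<rho> * cmod (z - b) \<longrightarrow> cdist ((F ^^ n) (Some z)) (Some a) < e"
    using contract_unif[OF ab rho q step e] by blast
  moreover have "cmod (w0 - a) \<le> \<rho> * cmod (w0 - b)" using w0in by simp
  ultimately show "\<exists>N. \<forall>k\<ge>N. cdist ((F ^^ k) (Some w0)) (Some a) < e" by blast
qed

end

lemma not_fatou:
  assumes cont: "\<And>x. scont f x" and pab: "cdist pa pb > 0"
    and near_a: "\<And>\<delta>. \<delta> > 0 \<Longrightarrow> \<exists>y. cdist x y < \<delta> \<and> (\<forall>e>0. \<exists>N. \<forall>k\<ge>N. cdist ((f ^^ k) y) pa < e)"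
    and near_b: "\<And>\<delta>. \<delta> > 0 \<Longrightarrow> \<exists>y. cdist x y < \<delta> \<and> (\<forall>e>0. \<exists>N. \<forall>k\<ge>N. cdist ((f ^^ k) y) pb < e)"
  shows "x \<notin> fatou_set f"
proof
  assume "x \<in> fatou_set f"
  then obtain U where U: "sphere_open U" "x \<in> U" "normal_iterates f U" unfolding fatou_set_def by blast
  have "\<forall>k::nat\<Rightarrow>nat. \<exists>r g. strict_mono r \<and> loc_unif_conv U (\<lambda>n. (f ^^ k (r n))) g"
    using U(3) unfolding normal_iterates_def .
  from spec[OF this, of "\<lambda>n. n"]
  obtain r :: "nat \<Rightarrow> nat" and g where rg: "strict_mono r" "loc_unif_conv U (\<lambda>n. (f ^^ r n)) g"
    by auto
  obtain d where d: "d > 0" "\<forall>e>0. \<exists>N. \<forall>n\<ge>N. \<forall>y\<in>U. cdist x y < d \<longrightarrow> cdist ((f ^^ r n) y) (g y) < e"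
    using rg(2) U(2) unfolding loc_unif_conv_def by auto
  obtain dU where dU: "dU > 0" "\<forall>y. cdist x y < dU \<longrightarrow> y \<in> U" using U(1,2) unfolding sphere_open_def by blast
  define \<epsilon> where "\<epsilon> = cdist pa pb / 8"
  have \<epsilon>0: "\<epsilon> > 0" using pab by (simp add: \<epsilon>_def)
  obtain N where N: "\<forall>n\<ge>N. \<forall>y\<in>U. cdist x y < d \<longrightarrow> cdist ((f ^^ r n) y) (g y) < \<epsilon>"
    using d(2) \<epsilon>0 by blast
  define \<phi> where "\<phi> = f ^^ r N"
  obtain \<delta>1 where \<delta>1: "\<delta>1 > 0" "\<forall>y. cdist x y < \<delta>1 \<longrightarrow> cdist (\<phi> x) (\<phi> y) < \<epsilon>"
    using scont_funpow[OF cont, of "r N" x] \<epsilon>0 unfolding scont_def \<phi>_def by blast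
  define \<delta> where "\<delta> = min d (min dU \<delta>1)"
  have \<delta>0: "\<delta> > 0" using d dU \<delta>1 by (simp add: \<delta>_def)
  have key: "cdist (\<phi> x) p < 4 * \<epsilon>"
    if near: "\<And>\<delta>. \<delta> > 0 \<Longrightarrow> \<exists>y. cdist x y < \<delta> \<and> (\<forall>e>0. \<exists>N. \<forall>k\<ge>N. cdist ((f ^^ k) y) p < e)" for p
  proof -
    obtain y where y: "cdist x y < \<delta>" "\<forall>e>0. \<exists>N. \<forall>k\<ge>N. cdist ((f ^^ k) y) p < e"
      using near[OF \<delta>0] by blast
    have yU: "y \<in> U" using y(1) dU by (simp add: \<delta>_def)
    have yd: "cdist x y < d" using y(1) by (simp add: \<delta>_def)
    obtain M where M: "\<forall>k\<ge>M. cdist ((f ^^ k) y) p < \<epsilon>" using y(2) \<epsilon>0 by blast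
    define n2 where "n2 = max N M"
    have rn2: "r n2 \<ge> M" using seq_suble[OF rg(1), of n2] by (simp add: n2_def)
    have t1: "cdist (\<phi> x) (\<phi> y) < \<epsilon>" using \<delta>1 y(1) by (simp add: \<delta>_def)
    have t2: "cdist (\<phi> y) (g y) < \<epsilon>" using N yU yd by (simp add: \<phi>_def)
    have t3: "cdist ((f ^^ r n2) y) (g y) < \<epsilon>" using N yU yd by (simp add: n2_def)
    have t4: "cdist ((f ^^ r n2) y) p < \<epsilon>" using M rn2 by blast
    have "cdist (\<phi> x) p \<le> cdist (\<phi> x) (\<phi> y) + cdist (\<phi> y) p" by (rule cdist_triangle)
    also have "cdist (\<phi> y) p \<le> cdist (\<phi> y) (g y) + cdist (g y) p" by (rule cdist_triangle)
    also have "cdist (g y) p \<le> cdist (g y) ((f ^^ r n2) y) + cdist ((f ^^ r n2) y) p" by (rule cdist_triangle)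
    finally show ?thesis using t1 t2 t3 t4 cdist_sym[of "g y" "(f ^^ r n2) y"] by simp
  qed
  have "cdist pa pb \<le> cdist pa (\<phi> x) + cdist (\<phi> x) pb" by (rule cdist_triangle)
  also have "\<dots> < 8 * \<epsilon>" using key[OF near_a] key[OF near_b] cdist_sym[of pa "\<phi> x"] by simp
  finally show False by (simp add: \<epsilon>_def)
qed

definition lineset :: "complex \<Rightarrow> complex \<Rightarrow> rsphere set" where
  "lineset c d = insert None {Some (c + complex_of_real t * d) | t. True}"

lemma cmod_Complex_lt: "cmod (Complex x y) < cmod (Complex x' y) \<longleftrightarrow> x\<^sup>2 < x'\<^sup>2"
  by (simp add: cmod_def)

lemma near_side:
  fixes a b :: complex
  assumes ab: "a \<noteq> b" and x: "x \<in> lineset ((a + b) / 2) (\<i> * (b - a) / 2)" and \<delta>: "\<delta> > 0"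
  shows "\<exists>y. cdist x (Some y) < \<delta> \<and> cmod (y - a) < cmod (y - b)"
proof -
  define e where "e = b - a"
  have e0: "e \<noteq> 0" using ab by (simp add: e_def)
  have ce: "cmod e > 0" using e0 by simp
  have side: "cmod (y - a) < cmod (y - b)" if "y - a = e * Complex (1/2 - s) u" "y - b = e * Complex (-1/2 - s) u" "s > 0" for y s u
  proof -
    have "cmod (Complex (1/2 - s) u) < cmod (Complex (-1/2 - s) u)"
      unfolding cmod_Complex_lt using that(3) by (simp add: power2_eq_square algebra_simps)
    then show ?thesis using that(1,2) ce by (simp add: norm_mult)
  qed
  show ?thesis
  proof (cases x)
    case None
    obtain R0 where R0: "\<forall>w. cmod w > R0 \<longrightarrow> cdist None (Some w) < \<delta>" using cdist_None_small[OF \<delta>] by blast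
    define R where "R = (\<bar>R0\<bar> + cmod ((a + b) / 2) + 1) / cmod e"
    have "0 < \<bar>R0\<bar> + cmod ((a + b) / 2) + 1" using abs_ge_zero[of R0] norm_ge_zero[of "(a+b)/2"] by linarith
    then have R0': "R > 0" using ce unfolding R_def by (rule divide_pos_pos)
    define y where "y = (a + b) / 2 - of_real R * e"
    have ya: "y - a = e * Complex (1/2 - R) 0"
      by (simp add: y_def e_def complex_eq_iff algebra_simps)
    have yb: "y - b = e * Complex (-1/2 - R) 0"
      by (simp add: y_def e_def complex_eq_iff algebra_simps)
    have "cmod (of_real R * e) \<le> cmod y + cmod ((a + b) / 2)"
      by (metis y_def norm_triangle_ineq4 norm_minus_commute add.commute diff_diff_eq2 diff_add_cancel
          norm_triangle_ineq)
    moreover have "cmod (of_real R * e) = \<bar>R0\<bar> + cmod ((a + b) / 2) + 1"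
    proof -
      have "cmod (of_real R * e) = R * cmod e" using R0' by (simp add: norm_mult)
      also have "\<dots> = \<bar>R0\<bar> + cmod ((a + b) / 2) + 1" using ce unfolding R_def by simp
      finally show ?thesis .
    qed
    ultimately have "cmod y > R0" by linarith
    then show ?thesis using None R0 side[OF ya yb R0'] by auto
  next
    case (Some z)
    then obtain t where t: "z = (a + b) / 2 + of_real t * (\<i> * (b - a) / 2)" using x by (auto simp: lineset_def)
    define s where "s = \<delta> / (4 * cmod e)"
    have s0: "s > 0" using \<delta> ce by (simp add: s_def)
    define y where "y = z - of_real s * e"
    have ya: "y - a = e * Complex (1/2 - s) (t/2)"
      by (simp add: y_def t e_def complex_eq_iff field_simps)
    have yb: "y - b = e * Complex (-1/2 - s) (t/2)"
      by (simp add: y_def t e_def complex_eq_iff field_simps)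
    have "cdist x (Some y) \<le> 2 * cmod (z - y)" using Some cdist_Some_le by simp
    also have "\<dots> = 2 * s * cmod e" using s0 by (simp add: y_def norm_mult)
    also have "\<dots> < \<delta>" using \<delta> ce by (simp add: s_def)
    finally show ?thesis using side[OF ya yb s0] by blast
  qed
qed

lemma lineset_swap: "lineset ((b + a) / 2) (\<i> * (a - b) / 2) = lineset ((a + b) / 2) (\<i> * (b - a) / 2)"
proof -
  have "{Some ((b + a) / 2 + complex_of_real t * (\<i> * (a - b) / 2)) |t. True}
      = {Some ((a + b) / 2 + complex_of_real t * (\<i> * (b - a) / 2)) |t. True}"
  proof (intro set_eqI iffI)
    fix x assume "x \<in> {Some ((b + a) / 2 + complex_of_real t * (\<i> * (a - b) / 2)) |t. True}"
    then obtain t where "x = Some ((b + a) / 2 + complex_of_real t * (\<i> * (a - b) / 2))" by blast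
    then have "x = Some ((a + b) / 2 + complex_of_real (- t) * (\<i> * (b - a) / 2))" by (simp add: algebra_simps)
    then show "x \<in> {Some ((a + b) / 2 + complex_of_real t * (\<i> * (b - a) / 2)) |t. True}" by blast
  next
    fix x assume "x \<in> {Some ((a + b) / 2 + complex_of_real t * (\<i> * (b - a) / 2)) |t. True}"
    then obtain t where "x = Some ((a + b) / 2 + complex_of_real t * (\<i> * (b - a) / 2))" by blast
    then have "x = Some ((b + a) / 2 + complex_of_real (- t) * (\<i> * (a - b) / 2))" by (simp add: algebra_simps)
    then show "x \<in> {Some ((b + a) / 2 + complex_of_real t * (\<i> * (a - b) / 2)) |t. True}" by blast
  qed
  then show ?thesis by (simp add: lineset_def)
qed

lemma equidist_line:
  fixes a b z :: complex
  assumes ab: "a \<noteq> b" and eq: "cmod (z - a) = cmod (z - b)"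
  shows "Some z \<in> lineset ((a + b) / 2) (\<i> * (b - a) / 2)"
proof -
  define e where "e = b - a"
  have e0: "e \<noteq> 0" using ab by (simp add: e_def)
  define v where "v = (2 * z - a - b) / e"
  have "Re ((b - a) * cnj (2 * z - a - b)) = 0"
    using sq_diff_re[of "z - a" "z - b"] eq by (simp add: algebra_simps)
  moreover have "2 * z - a - b = v * e" using e0 by (simp add: v_def)
  ultimately have "Re (e * cnj (v * e)) = 0" by (simp add: e_def)
  moreover have "Re (e * cnj (v * e)) = (cmod e)\<^sup>2 * Re v"
    unfolding cmod_power2 by (simp add: algebra_simps power2_eq_square)
  ultimately have "(cmod e)\<^sup>2 * Re v = 0" by simp
  then have rv: "Re v = 0" using e0 by (simp only: mult_eq_0_iff power_eq_0_iff norm_eq_zero) simp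
  have "z = (a + b) / 2 + complex_of_real (Im v) * (\<i> * (b - a) / 2)"
  proof -
    have "v = \<i> * complex_of_real (Im v)" using rv by (simp add: complex_eq_iff)
    then have "2 * z - a - b = \<i> * complex_of_real (Im v) * e" using \<open>2 * z - a - b = v * e\<close> by simp
    then show ?thesis by (simp add: e_def field_simps)
  qed
  then show ?thesis by (auto simp: lineset_def)
qed

context twoF begin

lemma sw: "twoF b a n m h"
  using ab m1 n1 h0 hk by unfold_locales (auto simp: add.commute)

lemma F_sw: "Fm b a n m h = F"
  by (simp add: Fm_sym[of a b m n h])

theorem julia_is_line:
  assumes mn: "m = n" and hr: "h = of_real r" and r0: "0 < r" and r1: "r < 2 * real m"
  shows "julia_set F = lineset ((a + b) / 2) (\<i> * (b - a) / 2)"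
proof -
  interpret S: twoF b a n m h by (rule sw)
  have sideA: "Some w \<in> fatou_set F" "\<And>e. e > 0 \<Longrightarrow> \<exists>N. \<forall>k\<ge>N. cdist ((F ^^ k) (Some w)) (Some a) < e"
    if "cmod (w - a) < cmod (w - b)" for w
    using side_a[OF mn hr r0 r1 that] by blast+
  have r1': "r < 2 * real n" using r1 mn by simp
  have sideB: "Some w \<in> fatou_set F" "\<And>e. e > 0 \<Longrightarrow> \<exists>N. \<forall>k\<ge>N. cdist ((F ^^ k) (Some w)) (Some b) < e"
    if "cmod (w - b) < cmod (w - a)" for w
    using S.side_a[OF mn[symmetric] hr r0 r1' that] F_sw by simp_all
  have pab: "cdist (Some a) (Some b) > 0"
  proof -
    have "cdist (Some a) (Some b) \<noteq> 0" using cdist_Some_eq0 ab by blast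
    then show ?thesis using cdist_nonneg[of "Some a" "Some b"] by linarith
  qed
  show ?thesis
  proof (intro set_eqI iffI)
    fix x assume x: "x \<in> julia_set F"
    then have nf: "x \<notin> fatou_set F" by (simp add: julia_set_def)
    show "x \<in> lineset ((a + b) / 2) (\<i> * (b - a) / 2)"
    proof (cases x)
      case None then show ?thesis by (simp add: lineset_def)
    next
      case (Some z)
      have "\<not> cmod (z - a) < cmod (z - b)" using sideA(1)[of z] nf Some by blast
      moreover have "\<not> cmod (z - b) < cmod (z - a)" using sideB(1)[of z] nf Some by blast
      ultimately have "cmod (z - a) = cmod (z - b)" by simp
      then show ?thesis using equidist_line[OF ab] Some by simp
    qed
  next
    fix x assume x: "x \<in> lineset ((a + b) / 2) (\<i> * (b - a) / 2)"
    have x': "x \<in> lineset ((b + a) / 2) (\<i> * (a - b) / 2)" using x lineset_swap by simp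
    have "x \<notin> fatou_set F"
    proof (rule not_fatou[OF scont_F pab])
      fix \<delta> :: real assume \<delta>: "\<delta> > 0"
      obtain y where y: "cdist x (Some y) < \<delta>" "cmod (y - a) < cmod (y - b)"
        using near_side[OF ab x \<delta>] by blast
      then show "\<exists>y. cdist x y < \<delta> \<and> (\<forall>e>0. \<exists>N. \<forall>k\<ge>N. cdist ((F ^^ k) y) (Some a) < e)"
        using sideA(2)[OF y(2)] by blast
    next
      fix \<delta> :: real assume \<delta>: "\<delta> > 0"
      obtain y where y: "cdist x (Some y) < \<delta>" "cmod (y - b) < cmod (y - a)"
        using near_side[OF ab[symmetric] x' \<delta>] by blast
      then show "\<exists>y. cdist x y < \<delta> \<and> (\<forall>e>0. \<exists>N. \<forall>k\<ge>N. cdist ((F ^^ k) y) (Some b) < e)"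
        using sideB(2)[OF y(2)] by blast
    qed
    then show "x \<in> julia_set F" by (simp add: julia_set_def)
  qed
qed

end

lemma nonreal_cnj:
  assumes "\<forall>t::real. \<alpha> \<noteq> of_real t" shows "\<alpha> \<noteq> cnj \<alpha>"
proof
  assume e: "\<alpha> = cnj \<alpha>"
  then have "Im \<alpha> = 0" using complex_eq_iff[of \<alpha> "cnj \<alpha>"] by simp
  then have "\<alpha> = of_real (Re \<alpha>)" by (simp add: complex_eq_iff)
  with assms show False by blast
qed

lemma alg_only_if:
  fixes \<alpha> \<beta> h :: complex and m n :: nat
  assumes m1: "m \<ge> 1" and n1: "n \<ge> 1" and h0: "h \<noteq> 0" and ab: "\<alpha> \<noteq> \<beta>"
    and anr: "\<forall>t::real. \<alpha> \<noteq> of_real t"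
    and real: "\<And>t::real. of_nat (m + n) * of_real t \<noteq> of_nat m * \<beta> + of_nat n * \<alpha> \<Longrightarrow>
        h * (of_real t - \<alpha>) * (of_real t - \<beta>) / (of_nat (m + n) * of_real t - (of_nat m * \<beta> + of_nat n * \<alpha>)) \<in> \<real>"
  shows "m = n \<and> h \<in> \<real>"
proof -
  define k :: complex where "k = of_nat (m + n)"
  define \<gamma> where "\<gamma> = of_nat m * \<beta> + of_nat n * \<alpha>"
  have k0: "k \<noteq> 0"
  proof -
    have "m + n \<noteq> 0" using m1 by simp
    then show ?thesis unfolding k_def by (simp only: of_nat_eq_0_iff) simp
  qed
  have cnjk: "cnj k = k" by (simp add: k_def)
  define P where "P = smult h ([:-\<alpha>,1:] * [:-\<beta>,1:] * [:-cnj \<gamma>, k:]) - smult (cnj h) ([:-cnj \<alpha>,1:] * [:-cnj \<beta>,1:] * [:-\<gamma>, k:])"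
  have polyP: "poly P x = h * (x - \<alpha>) * (x - \<beta>) * (k * x - cnj \<gamma>) - cnj h * (x - cnj \<alpha>) * (x - cnj \<beta>) * (k * x - \<gamma>)" for x
    by (simp add: P_def algebra_simps)
  have root: "poly P (of_real t) = 0" if t: "k * of_real t \<noteq> \<gamma>" for t :: real
  proof -
    define D where "D = k * of_real t - \<gamma>"
    have D0: "D \<noteq> 0" using t by (simp add: D_def)
    have cD: "cnj D = k * of_real t - cnj \<gamma>" by (simp add: D_def cnjk)
    have cD0: "cnj D \<noteq> 0" using D0 by simp
    define Q where "Q = h * (of_real t - \<alpha>) * (of_real t - \<beta>) / D"
    have "Q \<in> \<real>" using real[of t] t by (simp add: Q_def D_def k_def \<gamma>_def)
    then have "cnj Q = Q" by (simp add: Reals_cnj_iff)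
    moreover have "cnj Q = cnj h * (of_real t - cnj \<alpha>) * (of_real t - cnj \<beta>) / cnj D"
      by (simp add: Q_def)
    ultimately have "h * (of_real t - \<alpha>) * (of_real t - \<beta>) / D = cnj h * (of_real t - cnj \<alpha>) * (of_real t - cnj \<beta>) / cnj D"
      by (simp add: Q_def)
    then have "h * (of_real t - \<alpha>) * (of_real t - \<beta>) * cnj D = cnj h * (of_real t - cnj \<alpha>) * (of_real t - cnj \<beta>) * D"
      using D0 cD0 by (simp add: field_simps)
    then show ?thesis by (simp add: polyP cD D_def cnjk)
  qed
  have P0: "P = 0"
  proof (rule ccontr)
    assume "P \<noteq> 0"
    then have fin: "finite {x. poly P x = 0}" by (rule poly_roots_finite)
    define t0 where "t0 = Re \<gamma> / real (m + n)"
    define S0 where "S0 = (of_real :: real \<Rightarrow> complex) ` (UNIV - {t0})"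
    have "S0 \<subseteq> {x. poly P x = 0}"
    proof
      fix x assume "x \<in> S0"
      then obtain t where t: "x = of_real t" "t \<noteq> t0" by (auto simp: S0_def)
      have "k * of_real t \<noteq> \<gamma>"
      proof
        assume "k * of_real t = \<gamma>"
        then have "Re (k * of_real t) = Re \<gamma>" by simp
        then have "real (m + n) * t = Re \<gamma>" by (simp add: k_def)
        then have "t = t0" using m1 by (simp add: t0_def field_simps)
        then show False using t(2) by simp
      qed
      then show "x \<in> {x. poly P x = 0}" using root t(1) by simp
    qed
    moreover have "infinite S0"
    proof
      assume "finite S0"
      moreover have "inj_on (of_real :: real \<Rightarrow> complex) (UNIV - {t0})" by (simp add: inj_on_def)
      ultimately have "finite (UNIV - {t0} :: real set)" unfolding S0_def by (rule finite_imageD)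
      then show False using infinite_UNIV_char_0 by auto
    qed
    ultimately show False using fin finite_subset by blast
  qed
  have allP: "h * (x - \<alpha>) * (x - \<beta>) * (k * x - cnj \<gamma>) = cnj h * (x - cnj \<alpha>) * (x - cnj \<beta>) * (k * x - \<gamma>)" for x
    using polyP[of x] P0 by simp
  have acnj: "\<alpha> \<noteq> cnj \<alpha>" by (rule nonreal_cnj[OF anr])
  have ka: "k * \<alpha> - \<gamma> = of_nat m * (\<alpha> - \<beta>)" by (simp add: k_def \<gamma>_def algebra_simps)
  have kb: "k * \<beta> - \<gamma> = of_nat n * (\<beta> - \<alpha>)" by (simp add: k_def \<gamma>_def algebra_simps)
  have ka0: "k * \<alpha> - \<gamma> \<noteq> 0" using ka m1 ab by simp
  have kb0: "k * \<beta> - \<gamma> \<noteq> 0" using kb n1 ab by simp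
  have s1: "\<alpha> = cnj \<beta>"
  proof -
    have "cnj h * (\<alpha> - cnj \<alpha>) * (\<alpha> - cnj \<beta>) * (k * \<alpha> - \<gamma>) = 0" using allP[of \<alpha>] by simp
    then show ?thesis using h0 acnj ka0 by simp
  qed
  have s2: "cnj \<gamma> = \<gamma>"
  proof -
    have e1: "k * (\<gamma> / k) = \<gamma>" using k0 by simp
    have "h * (\<gamma> / k - \<alpha>) * (\<gamma> / k - \<beta>) * (\<gamma> - cnj \<gamma>) = 0" using allP[of "\<gamma> / k"] e1 by simp
    moreover have "\<gamma> / k - \<alpha> \<noteq> 0"
    proof
      assume "\<gamma> / k - \<alpha> = 0" then have "k * \<alpha> - \<gamma> = 0" using k0 by (simp add: field_simps)
      then show False using ka0 by simp
    qed
    moreover have "\<gamma> / k - \<beta> \<noteq> 0"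
    proof
      assume "\<gamma> / k - \<beta> = 0" then have "k * \<beta> - \<gamma> = 0" using k0 by (simp add: field_simps)
      then show False using kb0 by simp
    qed
    ultimately show ?thesis using h0 by simp
  qed
  have Ima: "Im \<alpha> \<noteq> 0" using acnj by (simp add: complex_eq_iff)
  have mn: "m = n"
  proof -
    have "Im \<gamma> = 0" using s2 by (simp add: complex_eq_iff)
    then have "(real n - real m) * Im \<alpha> = 0" using s1 by (simp add: \<gamma>_def algebra_simps)
    then show ?thesis using Ima by simp
  qed
  have hr: "cnj h = h"
  proof -
    define x0 where "x0 = \<gamma> / k + 1"
    have kx: "k * x0 - \<gamma> = k" using k0 by (simp add: x0_def field_simps)
    have kx': "k * x0 - cnj \<gamma> = k" using kx s2 by simp
    have x0r: "cnj x0 = x0" using s2 cnjk by (simp add: x0_def)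
    have W: "(x0 - cnj \<alpha>) * (x0 - cnj \<beta>) = (x0 - \<alpha>) * (x0 - \<beta>)" using s1 by simp
    have W0: "(x0 - \<alpha>) * (x0 - \<beta>) \<noteq> 0"
    proof
      assume "(x0 - \<alpha>) * (x0 - \<beta>) = 0"
      then have "x0 = \<alpha> \<or> x0 = \<beta>" by simp
      then have "\<alpha> = cnj \<alpha>" using x0r s1 by auto
      then show False using acnj by simp
    qed
    have "h * ((x0 - \<alpha>) * (x0 - \<beta>)) * k = cnj h * ((x0 - \<alpha>) * (x0 - \<beta>)) * k"
      using allP[of x0] kx kx' W by (simp add: mult.assoc)
    then show ?thesis using W0 k0 by simp
  qed
  show ?thesis using mn hr by (simp add: Reals_cnj_iff)
qed

theorem theoremC:
  fixes p :: "complex poly" and a b h :: complex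
  assumes "p \<noteq> 0" and "a \<noteq> b"
    and "{z. poly p z = 0} = {a, b}"
    and "cmod (h - of_nat (min (order a p) (order b p))) < real (min (order a p) (order b p))"
  shows "(\<exists>c d. d \<noteq> 0 \<and>
            julia_set (relaxed_newton h p) = insert None {Some (c + complex_of_real t * d) | t. True})
         \<longleftrightarrow> (order a p = order b p \<and> h \<in> \<real>)"
proof -
  note p0 = assms(1) and ab = assms(2) and roots = assms(3)
  define m where "m = order a p"
  define n where "n = order b p"
  define \<mu> where "\<mu> = min m n"
  have hmu: "cmod (h - of_nat \<mu>) < real \<mu>" using assms(4) by (simp add: \<mu>_def m_def n_def)
  have m1: "m \<ge> 1" using roots p0 order_root[of p a] by (auto simp: m_def)
  have n1: "n \<ge> 1" using roots p0 order_root[of p b] by (auto simp: n_def)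
  have h0: "h \<noteq> 0"
  proof
    assume "h = 0" then show False using hmu by simp
  qed
  have tri: "cmod (h - of_nat k) < real k" if "\<mu> \<le> k" for k
  proof -
    have "cmod (h - of_nat k) \<le> cmod (h - of_nat \<mu>) + cmod (of_nat \<mu> - (of_nat k :: complex))"
      by (metis diff_add_cancel norm_triangle_ineq add_diff_eq)
    also have "cmod (of_nat \<mu> - (of_nat k :: complex)) = real k - real \<mu>"
    proof -
      have "(of_nat \<mu> - (of_nat k :: complex)) = - of_real (real k - real \<mu>)" by simp
      then show ?thesis using that by (simp only: norm_minus_cancel norm_of_real)
    qed
    finally show ?thesis using hmu by simp
  qed
  have hm: "cmod (h - of_nat m) < real m" by (rule tri) (simp add: \<mu>_def)
  have hn: "cmod (h - of_nat n) < real n" by (rule tri) (simp add: \<mu>_def)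
  have hk: "h \<noteq> of_nat (m + n)"
  proof
    assume hh: "h = of_nat (m + n)"
    have X0: "real (m + n) - real \<mu> \<ge> 0" by (simp add: \<mu>_def)
    have "h - of_nat \<mu> = of_real (real (m + n) - real \<mu>)" using hh by simp
    then have "cmod (h - of_nat \<mu>) = \<bar>real (m + n) - real \<mu>\<bar>" by (simp only: norm_of_real)
    then have "cmod (h - of_nat \<mu>) = real (m + n) - real \<mu>" using X0 by simp
    moreover have "2 * real \<mu> \<le> real (m + n)" by (simp add: \<mu>_def)
    ultimately show False using hmu by linarith
  qed
  have RN: "relaxed_newton h p = Fm a b m n h"
    using relaxed_newton_Fm[OF p0 ab roots h0] hk by (simp add: m_def n_def)
  interpret T: twoF a b m n h using ab m1 n1 h0 hk by unfold_locales
  interpret S: twoF b a n m h by (rule T.sw)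
  have "(\<exists>c d. d \<noteq> 0 \<and> julia_set (Fm a b m n h) = insert None {Some (c + complex_of_real t * d) | t. True})
         \<longleftrightarrow> (m = n \<and> h \<in> \<real>)"
  proof
    assume "\<exists>c d. d \<noteq> 0 \<and> julia_set (Fm a b m n h) = insert None {Some (c + complex_of_real t * d) | t. True}"
    then obtain c d where d0: "d \<noteq> 0"
      and J: "julia_set (Fm a b m n h) = insert None {Some (c + complex_of_real t * d) | t. True}" by blast
    have fa: "Some a \<in> fatou_set (Fm a b m n h)" by (rule T.attracting_a[OF hm])
    define \<alpha> where "\<alpha> = (a - c) / d"
    define \<beta> where "\<beta> = (b - c) / d"
    have anr: "\<forall>t::real. \<alpha> \<noteq> of_real t"
    proof
      fix t :: real
      show "\<alpha> \<noteq> of_real t"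
      proof
        assume "\<alpha> = of_real t"
        then have "a = c + of_real t * d" using d0 by (simp add: \<alpha>_def field_simps)
        then have "Some a \<in> julia_set (Fm a b m n h)" unfolding J by blast
        then show False using fa by (simp add: julia_set_def)
      qed
    qed
    have abne: "\<alpha> \<noteq> \<beta>" using ab d0 by (simp add: \<alpha>_def \<beta>_def)
    have real: "h * (of_real t - \<alpha>) * (of_real t - \<beta>) / (of_nat (m + n) * of_real t - (of_nat m * \<beta> + of_nat n * \<alpha>)) \<in> \<real>"
      if kt: "of_nat (m + n) * of_real t \<noteq> of_nat m * \<beta> + of_nat n * \<alpha>" for t :: real
    proof -
      define z where "z = c + of_real t * d"
      define K where "K = of_nat (m + n) * of_real t - (of_nat m * \<beta> + of_nat n * \<alpha>)"
      have K0: "K \<noteq> 0" using kt by (simp add: K_def)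
      have za: "z - a = d * (of_real t - \<alpha>)" using d0 by (simp add: z_def \<alpha>_def field_simps)
      have zb: "z - b = d * (of_real t - \<beta>)" using d0 by (simp add: z_def \<beta>_def field_simps)
      have Bz: "nbd m n a b z = d * K"
        by (simp add: nbd_def za zb K_def algebra_simps)
      have Bz0: "nbd m n a b z \<noteq> 0" using Bz d0 K0 by simp
      define y where "y = z - h * (z - a) * (z - b) / nbd m n a b z"
      have Fz: "Fm a b m n h (Some z) = Some y" using Bz0 by (simp add: Fm_def y_def)
      have zJ: "Some z \<in> julia_set (Fm a b m n h)" unfolding J z_def by blast
      have "Some y \<notin> fatou_set (Fm a b m n h)"
      proof
        assume "Some y \<in> fatou_set (Fm a b m n h)"
        then have "Some z \<in> fatou_set (Fm a b m n h)"
          using fatou_pullback[OF T.scont_F, of "Some z"] Fz by simp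
        then show False using zJ by (simp add: julia_set_def)
      qed
      then have "Some y \<in> julia_set (Fm a b m n h)" by (simp add: julia_set_def)
      then obtain s where s: "y = c + of_real s * d" unfolding J by auto
      have "h * (z - a) * (z - b) / nbd m n a b z = of_real (t - s) * d"
        using s by (simp add: y_def z_def algebra_simps)
      moreover have "h * (z - a) * (z - b) / nbd m n a b z
          = d * (h * (of_real t - \<alpha>) * (of_real t - \<beta>) / K)"
        using d0 K0 by (simp add: za zb Bz field_simps)
      ultimately have "h * (of_real t - \<alpha>) * (of_real t - \<beta>) / K = of_real (t - s)"
        using d0 by (metis mult.commute mult_cancel_right)
      then show ?thesis by (simp add: K_def)
    qed
    show "m = n \<and> h \<in> \<real>" by (rule alg_only_if[OF m1 n1 h0 abne anr real])
  next
    assume mnh: "m = n \<and> h \<in> \<real>"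
    define r where "r = Re h"
    have hr: "h = of_real r" using mnh by (simp add: r_def complex_eq_iff complex_is_Real_iff)
    have "h - of_nat m = of_real (r - real m)" using hr by simp
    then have "cmod (h - of_nat m) = \<bar>r - real m\<bar>" by (simp only: norm_of_real)
    then have "\<bar>r - real m\<bar> < real m" using hm by simp
    then have r0: "0 < r" and r1: "r < 2 * real m" by auto
    have "julia_set (Fm a b m n h) = lineset ((a + b) / 2) (\<i> * (b - a) / 2)"
      using T.julia_is_line[OF _ hr r0 r1] mnh by simp
    moreover have "\<i> * (b - a) / 2 \<noteq> 0" using ab by simp
    ultimately show "\<exists>c d. d \<noteq> 0 \<and> julia_set (Fm a b m n h) = insert None {Some (c + complex_of_real t * d) | t. True}"
      unfolding lineset_def by blast
  qed
  then show ?thesis unfolding RN m_def n_def .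
qed

end
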